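(* Assume $\mathfrak I$ is compact and let $\mathsf C$ be a positively oriented simple closed contour enclosing $[0,I^+]$. Then for all $i,j\in\mathbb N$: for $n\ge1$, with $n$ factors $\phi$ and $n$ factors $\hat\phi/\lambda_0$ alternating, $$\Big(\phi*\tfrac{\hat\phi}{\lambda_0}*\cdots*\phi*\tfrac{\hat\phi}{\lambda_0}\Big)(i,j)=-\frac1{2\pi\mathrm i}\oint_{\mathsf C}\Big\langle\pi_iQ_i,\frac{Q_j(u)}{x-u}\Big\rangle_{\mathfrak w}\frac{du}{u^n};$$ for $n\ge0$, with $n+1$ factors $\phi$ and $n$ factors $\hat\phi/\lambda_0$ (starting and ending with $\phi$), $$\Big(\phi*\tfrac{\hat\phi}{\lambda_0}*\cdots*\tfrac{\hat\phi}{\lambda_0}*\phi\Big)(i,j)=-\frac1{2\pi\mathrm i}\oint_{\mathsf C}\Big\langle\pi_iQ_i,\frac{\hat Q_j(u)}{x-u}\Big\rangle_{\mathfrak w}\frac{du}{u^n};$$ for $n\ge1$, with $n$ factors of each, starting with $\hat\phi/\lambda_0$ and ending with $\phi$, $$\Big(\tfrac{\hat\phi}{\lambda_0}*\phi*\cdots*\tfrac{\hat\phi}{\lambda_0}*\phi\Big)(i,j)=-\frac1{2\pi\mathrm i}\oint_{\mathsf C}\Big\langle\hat\pi_i\hat Q_i,\frac{\hat Q_j(u)}{x-u}\Big\rangle_{\hat{\mathfrak w}}\frac{du}{u^n};$$ for $n\ge1$, with $n$ factors $\hat\phi/\lambda_0$ and $n-1$ factors $\phi$ (starting and ending with $\hat\phi/\lambda_0$),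 $$\Big(\tfrac{\hat\phi}{\lambda_0}*\phi*\cdots*\phi*\tfrac{\hat\phi}{\lambda_0}\Big)(i,j)=-\frac1{2\pi\mathrm i}\oint_{\mathsf C}\Big\langle\hat\pi_i\hat Q_i,\frac{Q_j(u)}{x-u}\Big\rangle_{\hat{\mathfrak w}}\frac{du}{u^n}.$$
   Context: Let $\lambda_k=\lambda(k)>0$ ($k\ge0$) and $\mu_k=\mu(k)$ with $\mu_0=0$, $\mu_k>0$ ($k\ge1$) be the rates of a birth and death chain on $\mathbb N=\{0,1,\dots\}$ reflecting at $0$, with $\pi_0=1$, $\pi_k=\prod_{i=1}^k\lambda_{i-1}/\mu_i$, and satisfying $\sum_{j\ge0}\frac{1}{\lambda_j\pi_j}\sum_{i=0}^{j}\pi_i=\sum_{j\ge0}\frac{1}{\lambda_j\pi_j}\sum_{i>j}\pi_i=\infty$. Dual rates: $\hat\lambda_k=\mu_{k+1}$, $\hat\mu_k=\lambda_k$; $\hat\pi_0=1$, $\hat\pi_k=\prod_{i=1}^k\mu_i/\lambda_i$. Polynomials $Q_n,\hat Q_n$ (degree $n$) are defined by $Q_{-1}=\hat Q_{-1}=0$, $Q_0=\hat Q_0=1$ and, for $n\ge0$, $-xQ_n(x)=\mu_nQ_{n-1}(x)-(\lambda_n+\mu_n)Q_n(x)+\lambda_nQ_{n+1}(x)$ and $-x\hat Q_n(x)=\lambda_n\hat Q_{n-1}(x)-(\mu_{n+1}+\lambda_n)\hat Q_n(x)+\mu_{n+1}\hat Q_{n+1}(x)$. Assume both associated moment problems are determinate: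 there are unique probability measures $\mathfrak w,\hat{\mathfrak w}$ on $[0,\infty)$ with $\int Q_iQ_j\,d\mathfrak w=\delta_{ij}/\pi_j$ and $\int\hat Q_i\hat Q_j\,d\hat{\mathfrak w}=\delta_{ij}/\hat\pi_j$; then $d\hat{\mathfrak w}(x)=x\,d\mathfrak w(x)/\lambda_0$ and both measures have the same support $\mathfrak I=[I^-,I^+]\subset[0,\infty]$. Write $\langle f,g\rangle_{\mathsf m}=\int f(x)g(x)\,d\mathsf m(x)$ (integration always in the variable $x$; contour integrals are in $u$). Define $\phi(i,j)=\pi_i\mathbf 1(i\le j)$ and $\hat\phi(i,j)=-\hat\pi_i\mathbf 1(i<j)$ for $i,j\in\mathbb N$, and the convolution $(h_1*h_2)(u,v)=\sum_{k\ge0}h_1(u,k)h_2(k,v)$. *)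

theory Defs
  imports "HOL-Analysis.Analysis" "HOL-Probability.Probability"
begin

definition has_contour_integral' :: "(complex \<Rightarrow> complex) \<Rightarrow> complex \<Rightarrow> (real \<Rightarrow> complex) \<Rightarrow> bool"
  where "has_contour_integral' f i g \<equiv>
           ((\<lambda>x. f (g x) * vector_derivative g (at x within {0..1})) has_integral i) {0..1}"

definition contour_integral' :: "(real \<Rightarrow> complex) \<Rightarrow> (complex \<Rightarrow> complex) \<Rightarrow> complex"
  where "contour_integral' g f \<equiv>
     SOME i. has_contour_integral' f i g \<or> (\<not> (\<exists>j. has_contour_integral' f j g) \<and> i = 0)"

definition winding_number' :: "(real \<Rightarrow> complex) \<Rightarrow> complex \<Rightarrow> complex"
  where "winding_number' g z = contour_integral' g (\<lambda>w. 1 / (w - z)) / (2 * pi * \<i>)"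

definition pos_simple_contour_enclosing :: "(real \<Rightarrow> complex) \<Rightarrow> complex set \<Rightarrow> bool"
  where "pos_simple_contour_enclosing g S \<longleftrightarrow>
     valid_path g \<and> simple_path g \<and> pathfinish g = pathstart g \<and>
     (\<forall>z\<in>S. z \<notin> path_image g \<and> winding_number' g z = 1)"

definition bd_pi :: "(nat \<Rightarrow> real) \<Rightarrow> (nat \<Rightarrow> real) \<Rightarrow> nat \<Rightarrow> real"
  where "bd_pi la mu k = (\<Prod>i\<in>{1..k}. la (i - 1) / mu i)"

definition dual_la :: "(nat \<Rightarrow> real) \<Rightarrow> (nat \<Rightarrow> real) \<Rightarrow> nat \<Rightarrow> real"
  where "dual_la la mu k = mu (Suc k)"
definition dual_mu :: "(nat \<Rightarrow> real) \<Rightarrow> (nat \<Rightarrow> real) \<Rightarrow> nat \<Rightarrow> real"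
  where "dual_mu la mu k = la k"

text \<open>Orthogonal polynomials: Q (-1) = 0, Q 0 = 1,
  -x Q n = mu n Q (n-1) - (la n + mu n) Q n + la n Q (n+1).\<close>
fun bdQ :: "(nat \<Rightarrow> real) \<Rightarrow> (nat \<Rightarrow> real) \<Rightarrow> nat \<Rightarrow> 'a::real_field \<Rightarrow> 'a" where
  "bdQ la mu 0 x = 1"
| "bdQ la mu (Suc 0) x = (of_real (la 0 + mu 0) - x) * bdQ la mu 0 x / of_real (la 0)"
| "bdQ la mu (Suc (Suc n)) x =
     ((of_real (la (Suc n) + mu (Suc n)) - x) * bdQ la mu (Suc n) x
       - of_real (mu (Suc n)) * bdQ la mu n x) / of_real (la (Suc n))"

definition orth_measure :: "(nat \<Rightarrow> real) \<Rightarrow> (nat \<Rightarrow> real) \<Rightarrow> real measure \<Rightarrow> bool"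
  where "orth_measure la mu m \<longleftrightarrow>
     prob_space m \<and> sets m = sets borel \<and> emeasure m {..<0} = 0 \<and>
     (\<forall>i j. integrable m (\<lambda>x. bdQ la mu i x * bdQ la mu j x) \<and>
            (\<integral>x. bdQ la mu i x * bdQ la mu j x \<partial>m) = (if i = j then 1 / bd_pi la mu j else 0))"

definition msupport :: "real measure \<Rightarrow> real set"
  where "msupport m = {x. \<forall>e>0. emeasure m {x - e<..<x + e} > 0}"

definition phi :: "(nat \<Rightarrow> real) \<Rightarrow> (nat \<Rightarrow> real) \<Rightarrow> nat \<Rightarrow> nat \<Rightarrow> real"
  where "phi la mu i j = (if i \<le> j then bd_pi la mu i else 0)"

definition phihat :: "(nat \<Rightarrow> real) \<Rightarrow> (nat \<Rightarrow> real) \<Rightarrow> nat \<Rightarrow> nat \<Rightarrow> real"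
  where "phihat la mu i j = (if i < j then - bd_pi (dual_la la mu) (dual_mu la mu) i else 0)"

definition kconv :: "(nat \<Rightarrow> nat \<Rightarrow> real) \<Rightarrow> (nat \<Rightarrow> nat \<Rightarrow> real) \<Rightarrow> nat \<Rightarrow> nat \<Rightarrow> real"
  where "kconv h1 h2 u v = (\<Sum>k. h1 u k * h2 k v)"

fun kconv_list :: "(nat \<Rightarrow> nat \<Rightarrow> real) list \<Rightarrow> nat \<Rightarrow> nat \<Rightarrow> real" where
  "kconv_list [] = (\<lambda>i j. if i = j then 1 else 0)"
| "kconv_list [K] = K"
| "kconv_list (K # L) = kconv K (kconv_list L)"

end

theory Submission
  imports Defs "HOL-Computational_Algebra.Polynomial" "HOL-Complex_Analysis.Complex_Analysis"
begin

fun Qp :: "(nat \<Rightarrow> real) \<Rightarrow> (nat \<Rightarrow> real) \<Rightarrow> nat \<Rightarrow> real poly" where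
  "Qp la mu 0 = 1"
| "Qp la mu (Suc 0) = smult (1 / la 0) [:la 0 + mu 0, -1:]"
| "Qp la mu (Suc (Suc n)) =
     smult (1 / la (Suc n)) ([:la (Suc n) + mu (Suc n), -1:] * Qp la mu (Suc n)
       - smult (mu (Suc n)) (Qp la mu n))"

definition evp :: "real poly \<Rightarrow> 'a::real_field \<Rightarrow> 'a" where
  "evp p x = poly (map_poly of_real p) x"

lemma evp_pCons[simp]: "evp (pCons a p) x = of_real a + x * evp p x"
  by (simp add: evp_def map_poly_pCons)
lemma evp_0[simp]: "evp 0 x = 0" by (simp add: evp_def)
lemma evp_add[simp]: "evp (p + q) x = evp p x + evp q x"
proof -
  have "map_poly of_real (p + q) = map_poly (of_real :: real \<Rightarrow> 'a) p + map_poly of_real q"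
    by (rule poly_eqI) (simp add: coeff_map_poly)
  then show ?thesis by (simp add: evp_def)
qed
lemma evp_smult[simp]: "evp (smult c p) x = of_real c * evp p x"
  by (simp add: evp_def map_poly_smult)
lemma evp_uminus[simp]: "evp (- p) x = - evp p x"
  using evp_smult[of "-1" p x] by simp
lemma evp_diff[simp]: "evp (p - q) x = evp p x - evp q x"
  using evp_add[of p "-q" x] by simp
lemma evp_mult[simp]: "evp (p * q) x = evp p x * evp q x"
  by (induction p) (simp_all add: algebra_simps)
lemma evp_const[simp]: "evp [:c:] x = of_real c" by simp
lemma evp_1[simp]: "evp 1 x = 1" by (simp add: one_pCons)
lemma evp_sum: "evp (\<Sum>k\<in>A. f k) x = (\<Sum>k\<in>A. evp (f k) x)"
  by (induction A rule: infinite_finite_induct) auto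
lemma evp_real[simp]: "evp p (x::real) = poly p x"
  by (induction p) auto
lemma evp_of_real: "evp p (of_real x) = of_real (poly p x)"
  by (induction p) auto

lemma of_real_div_mult: "(of_real (1/a) :: 'a::real_field) * z = z / of_real a"
  by (simp add: divide_inverse of_real_inverse mult.commute)

lemma bdQ_evp: "bdQ la mu n x = evp (Qp la mu n) x"
  by (induction la mu n x rule: bdQ.induct) (simp_all add: of_real_div_mult, auto simp: field_simps add_divide_distrib[symmetric])

lemma coeff_gt_degree: "degree p < i \<Longrightarrow> coeff p i = 0"
  by (simp add: coeff_eq_0)

lemma Qp_deg_lc: "degree (Qp la mu n) \<le> n \<and> coeff (Qp la mu n) n = (-1)^n / (\<Prod>k<n. la k)"
proof (induction la mu n rule: Qp.induct)
  case (1 la mu)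
  then show ?case by simp
next
  case (2 la mu)
  then show ?case by (auto simp: degree_pCons_le)
next
  case (3 la mu n)
  define Q1 where "Q1 = Qp la mu (Suc n)"
  define Q0 where "Q0 = Qp la mu n"
  have d1: "degree Q1 \<le> Suc n" and c1: "coeff Q1 (Suc n) = (-1)^(Suc n) / (\<Prod>k<Suc n. la k)"
    using 3 by (auto simp: Q1_def)
  have d0: "degree Q0 \<le> n" using 3 by (auto simp: Q0_def)
  have eq: "[:la (Suc n) + mu (Suc n), -1:] * Q1 = smult (la (Suc n) + mu (Suc n)) Q1 + pCons 0 (- Q1)"
    by (simp add: mult_pCons_left)
  have Qeq: "Qp la mu (Suc (Suc n)) = smult (1 / la (Suc n)) (smult (la (Suc n) + mu (Suc n)) Q1 + pCons 0 (- Q1) - smult (mu (Suc n)) Q0)"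
    by (simp add: eq Q1_def Q0_def)
  have "degree (smult (la (Suc n) + mu (Suc n)) Q1 + pCons 0 (- Q1) - smult (mu (Suc n)) Q0) \<le> Suc (Suc n)"
    apply (intro degree_diff_le degree_add_le)
    using d1 d0 degree_smult_le[of "la (Suc n) + mu (Suc n)" Q1] degree_smult_le[of "mu (Suc n)" Q0]
      degree_pCons_le[of 0 "-Q1"] by auto
  then have dg: "degree (Qp la mu (Suc (Suc n))) \<le> Suc (Suc n)"
    unfolding Qeq using degree_smult_le order_trans by blast
  have "coeff (Qp la mu (Suc (Suc n))) (Suc (Suc n)) = (1 / la (Suc n)) * (- coeff Q1 (Suc n))"
    unfolding Qeq using d1 d0 by (simp add: coeff_gt_degree)
  also have "\<dots> = (-1)^(Suc (Suc n)) / (\<Prod>k<Suc (Suc n). la k)"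
    by (simp add: c1)
  finally show ?case using dg by simp
qed

lemma Qp_degree: "(\<And>k. la k \<noteq> 0) \<Longrightarrow> degree (Qp la mu n) = n"
proof -
  assume h: "\<And>k. la k \<noteq> 0"
  have "coeff (Qp la mu n) n \<noteq> 0" using Qp_deg_lc[of la mu n] h by auto
  then have "n \<le> degree (Qp la mu n)" by (rule le_degree)
  then show ?thesis using Qp_deg_lc[of la mu n] by auto
qed

lemma Qp_span:
  assumes h: "\<And>k. la k \<noteq> 0"
  shows "degree p \<le> N \<Longrightarrow> \<exists>c. p = (\<Sum>k\<le>N. smult (c k) (Qp la mu k))"
proof (induction N arbitrary: p)
  case 0
  then have "p = [:coeff p 0:]" by (metis degree_0_id le_zero_eq)
  then have "p = (\<Sum>k\<le>0. smult ((\<lambda>_. coeff p 0) k) (Qp la mu k))" by (simp del: pCons_0_0)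
  then show ?case by (rule exI[of "\<lambda>c. p = (\<Sum>k\<le>0. smult (c k) (Qp la mu k))" "\<lambda>_. coeff p 0"])
next
  case (Suc N)
  define l where "l = coeff (Qp la mu (Suc N)) (Suc N)"
  have l0: "l \<noteq> 0" using Qp_deg_lc[of la mu "Suc N"] h by (auto simp: l_def)
  define a where "a = coeff p (Suc N) / l"
  define p' where "p' = p - smult a (Qp la mu (Suc N))"
  have dQ: "degree (Qp la mu (Suc N)) \<le> Suc N" using Qp_deg_lc by blast
  have dp': "degree p' \<le> Suc N" unfolding p'_def
    by (rule degree_diff_le[OF Suc.prems order_trans[OF degree_smult_le dQ]])
  have cp': "coeff p' (Suc N) = 0" using l0 by (simp add: p'_def a_def l_def)
  have "degree p' \<le> N"
  proof (rule ccontr)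
    assume "\<not> degree p' \<le> N"
    then have e: "degree p' = Suc N" using dp' by simp
    then have "p' = 0" using cp' leading_coeff_0_iff by metis
    then show False using e by simp
  qed
  then obtain c where c: "p' = (\<Sum>k\<le>N. smult (c k) (Qp la mu k))" using Suc.IH by blast
  have "(\<Sum>k\<le>Suc N. smult ((c(Suc N := a)) k) (Qp la mu k)) = (\<Sum>k\<le>N. smult (c k) (Qp la mu k)) + smult a (Qp la mu (Suc N))"
    by (subst sum.atMost_Suc) (auto intro!: sum.cong)
  also have "\<dots> = p" using c by (simp add: p'_def)
  finally have "p = (\<Sum>k\<le>Suc N. smult ((c(Suc N := a)) k) (Qp la mu k))" by simp
  then show ?case by blast
qed

lemma poly_shift_pCons: "pCons (coeff p 0) (poly_shift 1 p) = p"
  by (rule poly_eqI) (auto simp: coeff_pCons coeff_poly_shift split: nat.splits)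

lemma poly_shift_shift: "poly_shift m (poly_shift n p) = poly_shift (m + n) p"
  by (rule poly_eqI) (simp add: coeff_poly_shift add.assoc)

lemma evp_shift1: "evp q u = of_real (coeff q 0) + u * evp (poly_shift 1 q) u"
  by (subst poly_shift_pCons[of q, symmetric]) (simp only: evp_pCons)

lemma evp_shift: "evp q u = (\<Sum>k<n. of_real (coeff q k) * u^k) + u^n * evp (poly_shift n q) u"
proof (induction n arbitrary: q)
  case 0 then show ?case by simp
next
  case (Suc n)
  have "evp q u = of_real (coeff q 0) + u * evp (poly_shift 1 q) u" by (rule evp_shift1)
  also have "evp (poly_shift 1 q) u = (\<Sum>k<n. of_real (coeff (poly_shift 1 q) k) * u^k) + u^n * evp (poly_shift n (poly_shift 1 q)) u"
    by (rule Suc.IH)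
  finally have e: "evp q u = of_real (coeff q 0) + u * ((\<Sum>k<n. of_real (coeff q (Suc k)) * u^k) + u^n * evp (poly_shift (Suc n) q) u)"
    by (simp add: poly_shift_shift coeff_poly_shift)
  have "(\<Sum>k<Suc n. of_real (coeff q k) * u^k) = of_real (coeff q 0) + u * (\<Sum>k<n. of_real (coeff q (Suc k)) * u^k)"
    by (subst sum.lessThan_Suc_shift) (simp add: sum_distrib_left mult_ac)
  then show ?case using e by (simp add: distrib_left mult.assoc)
qed

definition Lf :: "real measure \<Rightarrow> real poly \<Rightarrow> real" where
  "Lf M p = (\<integral>x. poly p x \<partial>M)"

lemma poly_sum_gen: "poly (\<Sum>k\<in>A. f k) x = (\<Sum>k\<in>A. poly (f k) x)"
  by (induction A rule: infinite_finite_induct) auto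

locale orthsys =
  fixes la mu :: "nat \<Rightarrow> real" and M :: "real measure"
  assumes orth: "orth_measure la mu M"
    and la_nz: "\<And>k. la k \<noteq> 0"
    and pi_nz: "\<And>k. bd_pi la mu k \<noteq> 0"
begin

lemma Qp_poly: "bdQ la mu k (x::real) = poly (Qp la mu k) x"
  by (simp add: bdQ_evp)

lemma integrable_Q: "integrable M (\<lambda>x. poly (Qp la mu k) x)"
proof -
  have "integrable M (\<lambda>x. bdQ la mu k x * bdQ la mu 0 x)"
    using orth unfolding orth_measure_def by blast
  then show ?thesis by (simp add: Qp_poly)
qed

lemma integrable_poly: "integrable M (\<lambda>x. poly p x)"
proof -
  obtain c where c: "p = (\<Sum>k\<le>degree p. smult (c k) (Qp la mu k))"
    using Qp_span[where la=la and p=p and N="degree p" and mu=mu, OF la_nz] by blast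
  have "integrable M (\<lambda>x. \<Sum>k\<le>degree p. c k * poly (Qp la mu k) x)"
    by (auto intro!: Bochner_Integration.integrable_sum integrable_mult_right integrable_Q)
  then show ?thesis by (subst c) (simp add: poly_sum_gen[abs_def])
qed

lemma Lf_add: "Lf M (p + q) = Lf M p + Lf M q"
  unfolding Lf_def poly_add[abs_def] by (simp add: integrable_poly)
lemma Lf_smult: "Lf M (smult c p) = c * Lf M p"
  unfolding Lf_def poly_smult[abs_def] by simp
lemma Lf_diff: "Lf M (p - q) = Lf M p - Lf M q"
  unfolding Lf_def poly_diff[abs_def] by (simp add: integrable_poly)
lemma Lf_0: "Lf M 0 = 0" by (simp add: Lf_def poly_0[abs_def])
lemma Lf_sum: "Lf M (\<Sum>k\<in>A. f k) = (\<Sum>k\<in>A. Lf M (f k))"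
  by (induction A rule: infinite_finite_induct) (auto simp: Lf_add Lf_0)

lemma Lf_orth: "Lf M (Qp la mu i * Qp la mu j) = (if i = j then 1 / bd_pi la mu j else 0)"
proof -
  have "(\<integral>x. bdQ la mu i x * bdQ la mu j x \<partial>M) = (if i = j then 1 / bd_pi la mu j else 0)"
    using orth unfolding orth_measure_def by blast
  then show ?thesis by (simp add: Lf_def Qp_poly poly_mult[abs_def])
qed

lemma Lf_orth_deg: "degree p < K \<Longrightarrow> Lf M (Qp la mu K * p) = 0"
proof -
  assume d: "degree p < K"
  then obtain N where K: "K = Suc N" by (cases K) auto
  obtain c where c: "p = (\<Sum>k\<le>N. smult (c k) (Qp la mu k))"
    using Qp_span[where la=la and p=p and N=N and mu=mu, OF la_nz] d K by auto
  have "Lf M (Qp la mu K * p) = (\<Sum>k\<le>N. c k * Lf M (Qp la mu K * Qp la mu k))"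
    by (subst c) (simp add: sum_distrib_left Lf_sum Lf_smult)
  also have "\<dots> = 0" using K by (auto simp: Lf_orth intro!: sum.neutral)
  finally show ?thesis .
qed

lemma Lf_coeff:
  assumes "degree p \<le> N" "m \<le> N"
  obtains c where "p = (\<Sum>k\<le>N. smult (c k) (Qp la mu k))" "bd_pi la mu m * Lf M (Qp la mu m * p) = c m"
proof -
  obtain c where c: "p = (\<Sum>k\<le>N. smult (c k) (Qp la mu k))"
    using Qp_span[where la=la and p=p and N=N and mu=mu, OF la_nz] assms by auto
  have "Lf M (Qp la mu m * p) = (\<Sum>k\<le>N. c k * Lf M (Qp la mu m * Qp la mu k))"
    by (subst c) (simp add: sum_distrib_left Lf_sum Lf_smult)
  also have "\<dots> = (\<Sum>k\<in>{m}. c k * Lf M (Qp la mu m * Qp la mu k))"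
    using assms(2) by (intro sum.mono_neutral_right) (auto simp: Lf_orth)
  also have "\<dots> = c m / bd_pi la mu m" by (simp add: Lf_orth)
  finally show ?thesis using that c pi_nz by auto
qed

lemma Lf_expand:
  assumes "degree p \<le> N"
  shows "p = (\<Sum>k\<le>N. smult (bd_pi la mu k * Lf M (Qp la mu k * p)) (Qp la mu k))"
proof -
  obtain c where c: "p = (\<Sum>k\<le>N. smult (c k) (Qp la mu k))"
    using Qp_span[where la=la and p=p and N=N and mu=mu, OF la_nz] assms by auto
  have "bd_pi la mu k * Lf M (Qp la mu k * p) = c k" if "k \<le> N" for k
  proof -
    have "Lf M (Qp la mu k * p) = (\<Sum>j\<le>N. c j * Lf M (Qp la mu k * Qp la mu j))"
      by (subst c) (simp add: sum_distrib_left Lf_sum Lf_smult)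
    also have "\<dots> = (\<Sum>j\<in>{k}. c j * Lf M (Qp la mu k * Qp la mu j))"
      using that by (intro sum.mono_neutral_right) (auto simp: Lf_orth)
    finally show ?thesis using pi_nz by (simp add: Lf_orth)
  qed
  then show ?thesis by (subst c) (auto intro!: sum.cong)
qed

end

lemma Qp_rec: "poly (Qp la mu (Suc (Suc n))) x =
   ((la (Suc n) + mu (Suc n) - x) * poly (Qp la mu (Suc n)) x - mu (Suc n) * poly (Qp la mu n) x) / la (Suc n)"
  by (simp add: algebra_simps divide_inverse)
lemma Qp_1: "poly (Qp la mu (Suc 0)) x = (la 0 + mu 0 - x) / la 0"
  by (simp add: algebra_simps divide_inverse)

declare Qp.simps(2,3)[simp del]

lemma bd_pi_0[simp]: "bd_pi la mu 0 = 1" by (simp add: bd_pi_def)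
lemma bd_pi_Suc: "bd_pi la mu (Suc k) = bd_pi la mu k * (la k / mu (Suc k))"
  by (simp add: bd_pi_def prod.nat_ivl_Suc')

locale bdchain =
  fixes la mu :: "nat \<Rightarrow> real"
  assumes la_pos: "\<And>k. la k > 0" and mu0: "mu 0 = 0" and mu_pos: "\<And>k. k \<ge> 1 \<Longrightarrow> mu k > 0"
begin

abbreviation "ppi \<equiv> bd_pi la mu"
abbreviation "dla \<equiv> dual_la la mu"
abbreviation "dmu \<equiv> dual_mu la mu"
abbreviation "pph \<equiv> bd_pi dla dmu"

lemma pi_pos: "ppi k > 0"
  by (induction k) (auto simp: bd_pi_Suc la_pos mu_pos)
lemma pih_pos: "pph k > 0"
  by (induction k) (auto simp: bd_pi_Suc la_pos mu_pos dual_la_def dual_mu_def)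
lemma dla_pos: "dla k > 0" by (simp add: dual_la_def mu_pos)
lemma dmu_pos: "dmu k > 0" by (simp add: dual_mu_def la_pos)

lemma pih_pi: "pph j * ppi j * la j = la 0"
proof (induction j)
  case 0 then show ?case by simp
next
  case (Suc j)
  have "pph (Suc j) * ppi (Suc j) * la (Suc j) = (pph j * ppi j * la j) * (mu (Suc j) / la (Suc j)) * (1 / mu (Suc j)) * la (Suc j)"
    by (simp add: bd_pi_Suc dual_la_def dual_mu_def field_simps)
  also have "\<dots> = la 0" using Suc la_pos[of "Suc j"] mu_pos[of "Suc j"] by (simp add: field_simps)
  finally show ?case .
qed

lemma Q_at0': "poly (Qp la mu n) 0 = 1 \<and> poly (Qp la mu (Suc n)) 0 = 1"
proof (induction n)
  case 0 then show ?case using la_pos[of 0] by (simp add: Qp_1 mu0)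
next
  case (Suc n) then show ?case using la_pos[of "Suc n"] by (simp add: Qp_rec field_simps)
qed

lemma Q_at0: "poly (Qp la mu n) 0 = 1" using Q_at0' by blast


definition S :: "nat \<Rightarrow> real \<Rightarrow> real" where
  "S n x = (\<Sum>k\<le>n. ppi k * poly (Qp la mu k) x)"

lemma pi_mu: "ppi (Suc n) * mu (Suc n) = la n * ppi n"
  using mu_pos[of "Suc n"] by (simp add: bd_pi_Suc)

lemma D_rel: "la n * ppi n * (poly (Qp la mu n) x - poly (Qp la mu (Suc n)) x) = x * S n x"
proof (induction n)
  case 0 then show ?case using la_pos[of 0] by (simp add: Qp_1 mu0 S_def field_simps)
next
  case (Suc n)
  have r: "la (Suc n) * (poly (Qp la mu (Suc n)) x - poly (Qp la mu (Suc (Suc n))) x)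
     = x * poly (Qp la mu (Suc n)) x + mu (Suc n) * (poly (Qp la mu n) x - poly (Qp la mu (Suc n)) x)"
    using la_pos[of "Suc n"] by (simp add: Qp_rec field_simps)
  have "la (Suc n) * ppi (Suc n) * (poly (Qp la mu (Suc n)) x - poly (Qp la mu (Suc (Suc n))) x)
     = ppi (Suc n) * (la (Suc n) * (poly (Qp la mu (Suc n)) x - poly (Qp la mu (Suc (Suc n))) x))"
    by (simp only: mult_ac)
  also have "\<dots> = ppi (Suc n) * (x * poly (Qp la mu (Suc n)) x + mu (Suc n) * (poly (Qp la mu n) x - poly (Qp la mu (Suc n)) x))"
    by (simp only: r)
  also have "\<dots> = ppi (Suc n) * (x * poly (Qp la mu (Suc n)) x) + (ppi (Suc n) * mu (Suc n)) * (poly (Qp la mu n) x - poly (Qp la mu (Suc n)) x)"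
    by (simp add: algebra_simps)
  also have "\<dots> = ppi (Suc n) * (x * poly (Qp la mu (Suc n)) x) + x * S n x"
    using Suc by (simp add: pi_mu mult.assoc)
  also have "\<dots> = x * S (Suc n) x" by (simp add: S_def algebra_simps)
  finally show ?case .
qed

lemma Qh_S': "poly (Qp dla dmu n) x = S n x \<and> poly (Qp dla dmu (Suc n)) x = S (Suc n) x"
proof (induction n)
  case 0
  have "S (Suc 0) x = 1 + la 0 / mu 1 * ((la 0 - x) / la 0)"
    by (simp add: S_def Qp_1 mu0 bd_pi_Suc)
  also have "\<dots> = (mu 1 + la 0 - x) / mu 1"
    using la_pos[of 0] mu_pos[of 1] by (simp add: field_simps)
  finally show ?case using la_pos[of 0] mu_pos[of 1] by (simp add: Qp_1 S_def dual_la_def dual_mu_def)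
next
  case (Suc n)
  have IH: "poly (Qp dla dmu n) x = S n x" "poly (Qp dla dmu (Suc n)) x = S (Suc n) x" using Suc by auto
  have e1: "S (Suc (Suc n)) x - S (Suc n) x = ppi (Suc (Suc n)) * poly (Qp la mu (Suc (Suc n))) x"
    by (simp add: S_def)
  have e2: "S (Suc n) x - S n x = ppi (Suc n) * poly (Qp la mu (Suc n)) x"
    by (simp add: S_def)
  have d: "la (Suc n) * ppi (Suc n) * (poly (Qp la mu (Suc n)) x - poly (Qp la mu (Suc (Suc n))) x) = x * S (Suc n) x"
    by (rule D_rel)
  have "mu (Suc (Suc n)) * (S (Suc (Suc n)) x - S (Suc n) x) = la (Suc n) * (S (Suc n) x - S n x) - x * S (Suc n) x"
    unfolding e1 e2 using d pi_mu[of "Suc n"] by (simp add: algebra_simps)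
  then have "S (Suc (Suc n)) x = ((mu (Suc (Suc n)) + la (Suc n) - x) * S (Suc n) x - la (Suc n) * S n x) / mu (Suc (Suc n))"
    using mu_pos[of "Suc (Suc n)"] by (simp add: field_simps)
  moreover have "poly (Qp dla dmu (Suc (Suc n))) x = ((dla (Suc n) + dmu (Suc n) - x) * poly (Qp dla dmu (Suc n)) x - dmu (Suc n) * poly (Qp dla dmu n) x) / dla (Suc n)"
    by (rule Qp_rec)
  moreover have "dla (Suc n) = mu (Suc (Suc n))" "dmu (Suc n) = la (Suc n)" by (simp_all add: dual_la_def dual_mu_def)
  ultimately show ?case using IH by simp
qed

lemma Qh_S: "poly (Qp dla dmu n) x = S n x" using Qh_S' by blast

lemma Qh_sum: "Qp dla dmu n = (\<Sum>k\<le>n. smult (ppi k) (Qp la mu k))"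
  by (rule poly_eq_poly_eq_iff[THEN iffD1], rule ext) (simp add: Qh_S S_def poly_sum_gen)

lemma xQh: "[:0,1:] * Qp dla dmu n = smult (la n * ppi n) (Qp la mu n - Qp la mu (Suc n))"
  by (rule poly_eq_poly_eq_iff[THEN iffD1], rule ext) (simp add: Qh_S D_rel[symmetric])

end

lemma meas_borel: "sets M = sets borel \<Longrightarrow> continuous_on UNIV f \<Longrightarrow> f \<in> borel_measurable M"
  using borel_measurable_continuous_onI measurable_cong_sets by blast

lemma poly_meas: "sets M = sets borel \<Longrightarrow> (\<lambda>x. poly p x :: real) \<in> borel_measurable M"
  by (rule meas_borel) (auto intro: continuous_intros)

locale setting = bdchain +
  fixes w wh :: "real measure"
  assumes w_orth: "orth_measure la mu w"
    and wh_orth: "orth_measure dla dmu wh"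
    and wh_unique: "\<And>m. orth_measure dla dmu m \<Longrightarrow> m = wh"
begin

lemma w_sys: "orthsys la mu w"
proof unfold_locales
  show "orth_measure la mu w" by (rule w_orth)
  fix k show "la k \<noteq> 0" using la_pos[of k] by simp
  show "ppi k \<noteq> 0" using pi_pos[of k] by simp
qed

lemma wh_sys: "orthsys dla dmu wh"
proof unfold_locales
  show "orth_measure dla dmu wh" by (rule wh_orth)
  fix k show "dla k \<noteq> 0" using dla_pos[of k] by simp
  show "pph k \<noteq> 0" using pih_pos[of k] by simp
qed

lemma w_sets: "sets w = sets borel" using w_orth by (simp add: orth_measure_def)
lemma w_prob: "prob_space w" using w_orth by (simp add: orth_measure_def)
lemma w_space: "space w = UNIV" using sets_eq_imp_space_eq[OF w_sets] by simp

lemma w_nonneg: "AE x in w. 0 \<le> x"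
proof (rule AE_I')
  show "{..<0::real} \<in> null_sets w"
    using w_orth w_sets by (auto simp: orth_measure_def)
qed auto

lemma Lf_w_1: "Lf w 1 = 1"
  using orthsys.Lf_orth[OF w_sys, of 0 0] by simp

lemma Lf_w_x: "Lf w [:0,1:] = la 0"
proof -
  have q1: "Qp la mu (Suc 0) = 1 - smult (1 / la 0) [:0,1:]"
    using la_pos[of 0] by (simp add: Qp.simps(2) mu0 one_pCons)
  have qq: "Qp la mu 1 * Qp la mu 0 = 1 - smult (1 / la 0) [:0,1:]" using q1 by simp
  have "0 = Lf w (Qp la mu 1 * Qp la mu 0)" using orthsys.Lf_orth[OF w_sys, of 1 0] by simp
  also have "\<dots> = Lf w 1 - Lf w (smult (1 / la 0) [:0,1:])" by (simp only: qq orthsys.Lf_diff[OF w_sys])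
  also have "\<dots> = 1 - (1 / la 0) * Lf w [:0,1:]" by (simp only: Lf_w_1 orthsys.Lf_smult[OF w_sys])
  finally show ?thesis using la_pos[of 0] by (simp add: field_simps)
qed

definition wd where "wd = density w (\<lambda>x. ennreal (x / la 0))"

lemma g_meas: "(\<lambda>x. x / la 0) \<in> borel_measurable w"
  by (rule meas_borel[OF w_sets]) (use la_pos[of 0] in \<open>auto intro!: continuous_intros\<close>)

lemma wd_int: "integrable wd (\<lambda>x. poly p x) \<and> (\<integral>x. poly p x \<partial>wd) = Lf w ([:0,1:] * p) / la 0"
proof -
  have nn: "AE x in w. 0 \<le> x / la 0" using w_nonneg la_pos[of 0] by (auto elim!: AE_mp)
  have i: "integrable w (\<lambda>x. (x / la 0) *\<^sub>R poly p x)"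
  proof -
    have "integrable w (\<lambda>x. (1 / la 0) * poly ([:0,1:] * p) x)"
      using orthsys.integrable_poly[OF w_sys] by (rule integrable_mult_right)
    then show ?thesis by simp
  qed
  have "integrable wd (\<lambda>x. poly p x)" unfolding wd_def
    by (subst integrable_density[OF poly_meas[OF w_sets] g_meas nn]) (rule i)
  moreover have "(\<integral>x. poly p x \<partial>wd) = (\<integral>x. (x / la 0) *\<^sub>R poly p x \<partial>w)" unfolding wd_def
    by (rule integral_density[OF poly_meas[OF w_sets] g_meas nn])
  moreover have "(\<integral>x. (x / la 0) *\<^sub>R poly p x \<partial>w) = Lf w ([:0,1:] * p) / la 0"
  proof -
    have "(\<lambda>x. (x / la 0) *\<^sub>R poly p x) = (\<lambda>x. poly ([:0,1:] * p) x / la 0)"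
      by (auto simp: fun_eq_iff)
    then show ?thesis unfolding Lf_def by (simp only: integral_divide_zero)
  qed
  ultimately show ?thesis by simp
qed


lemma LQQh: "Lf w (Qp la mu m * Qp dla dmu j) = (if m \<le> j then 1 else 0)"
proof -
  have "Lf w (Qp la mu m * Qp dla dmu j) = (\<Sum>k\<le>j. ppi k * Lf w (Qp la mu m * Qp la mu k))"
    by (simp add: Qh_sum sum_distrib_left orthsys.Lf_sum[OF w_sys] orthsys.Lf_smult[OF w_sys] mult.left_commute)
  also have "\<dots> = (\<Sum>k\<le>j. if k = m then 1 else 0)"
    using pi_pos by (intro sum.cong) (auto simp: orthsys.Lf_orth[OF w_sys] less_imp_neq[symmetric])
  also have "\<dots> = (if m \<le> j then 1 else 0)" by simp
  finally show ?thesis .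
qed

lemma wd_orth: "orth_measure dla dmu wd"
  unfolding orth_measure_def
proof (intro conjI allI)
  have nn: "AE x in w. 0 \<le> x / la 0" using w_nonneg la_pos[of 0] by (auto elim!: AE_mp)
  have sw: "space wd = UNIV" by (simp add: wd_def w_space)
  have "emeasure wd UNIV = (\<integral>\<^sup>+ x. ennreal (x / la 0) * indicator UNIV x \<partial>w)"
    unfolding wd_def by (rule emeasure_density) (auto simp: w_sets intro: measurable_compose[OF g_meas measurable_ennreal])
  also have "\<dots> = (\<integral>\<^sup>+ x. ennreal (x / la 0) \<partial>w)" by simp
  also have "\<dots> = ennreal (\<integral>x. x / la 0 \<partial>w)"
  proof (rule nn_integral_eq_integral[OF _ nn])
    have "integrable w (\<lambda>x. poly [:0, 1 / la 0:] x)" by (rule orthsys.integrable_poly[OF w_sys])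
    then show "integrable w (\<lambda>x. x / la 0)" by simp
  qed
  also have "(\<integral>x. x / la 0 \<partial>w) = 1"
  proof -
    have pe: "(\<lambda>x::real. poly [:0,1:] x) = (\<lambda>x. x)" by (auto simp: fun_eq_iff)
    have "(\<integral>x. x / la 0 \<partial>w) = Lf w [:0,1:] / la 0" unfolding Lf_def pe by (rule integral_divide_zero)
    then show ?thesis using Lf_w_x la_pos[of 0] by simp
  qed
  finally show "prob_space wd" using sw by (intro prob_spaceI) simp
  show "sets wd = sets borel" by (simp add: wd_def w_sets)
  have "emeasure wd {..<0} = (\<integral>\<^sup>+ x. ennreal (x / la 0) * indicator {..<0} x \<partial>w)"
    unfolding wd_def by (rule emeasure_density) (auto simp: w_sets intro: measurable_compose[OF g_meas measurable_ennreal])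
  also have "\<dots> = (\<integral>\<^sup>+ x. 0 \<partial>w)"
    by (rule nn_integral_cong_AE) (use w_nonneg in \<open>auto elim!: AE_mp\<close>)
  finally show "emeasure wd {..<0} = 0" by simp
  fix i j
  have e: "(\<lambda>x. bdQ dla dmu i x * bdQ dla dmu j x) = (\<lambda>x. poly (Qp dla dmu i * Qp dla dmu j) x)"
    by (simp add: bdQ_evp)
  show "integrable wd (\<lambda>x. bdQ dla dmu i x * bdQ dla dmu j x)"
    unfolding e using wd_int by blast
  have "(\<integral>x. bdQ dla dmu i x * bdQ dla dmu j x \<partial>wd) = Lf w ([:0,1:] * (Qp dla dmu i * Qp dla dmu j)) / la 0"
    unfolding e using wd_int by blast
  also have "[:0,1:] * (Qp dla dmu i * Qp dla dmu j) = smult (la i * ppi i) (Qp la mu i * Qp dla dmu j - Qp la mu (Suc i) * Qp dla dmu j)"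
  proof -
    have "[:0,1:] * (Qp dla dmu i * Qp dla dmu j) = ([:0,1:] * Qp dla dmu i) * Qp dla dmu j" by (simp only: mult.assoc)
    also have "\<dots> = smult (la i * ppi i) (Qp la mu i - Qp la mu (Suc i)) * Qp dla dmu j" by (simp only: xQh)
    finally show ?thesis by (simp only: mult_smult_left left_diff_distrib)
  qed
  also have "Lf w \<dots> = la i * ppi i * ((if i \<le> j then 1 else 0) - (if Suc i \<le> j then 1 else 0))"
    by (simp add: orthsys.Lf_smult[OF w_sys] orthsys.Lf_diff[OF w_sys] LQQh)
  finally have I: "(\<integral>x. bdQ dla dmu i x * bdQ dla dmu j x \<partial>wd) = la i * ppi i * ((if i \<le> j then 1 else 0) - (if Suc i \<le> j then 1 else 0)) / la 0" .
  show "(\<integral>x. bdQ dla dmu i x * bdQ dla dmu j x \<partial>wd) = (if i = j then 1 / pph j else 0)"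
  proof (cases "i = j")
    case True
    have "la j * ppi j / la 0 = 1 / pph j"
      using pih_pi[of j] pih_pos[of j] la_pos[of 0] by (auto simp: field_simps)
    then show ?thesis using I True by simp
  next
    case False
    then have "(if i \<le> j then 1 else 0) - (if Suc i \<le> j then 1 else 0) = (0::real)" by auto
    then show ?thesis using I False by simp
  qed
qed

lemma wh_eq: "wh = wd" using wh_unique[OF wd_orth] by simp

lemma Lf_wh: "Lf wh p = Lf w ([:0,1:] * p) / la 0"
  using wd_int[of p] by (simp add: wh_eq Lf_def)

end

lemma kconv_list_Cons: "L \<noteq> [] \<Longrightarrow> kconv_list (K # L) = kconv K (kconv_list L)"
  by (cases L) auto

lemma concat_rep_swap: "a # concat (replicate n [b, a]) = concat (replicate n [a, b]) @ [a]"
  by (induction n) auto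

context setting
begin

definition cf where "cf i p = ppi i * Lf w (Qp la mu i * p)"
definition ch where "ch i p = pph i * Lf wh (Qp dla dmu i * p)"
abbreviation "phh \<equiv> (\<lambda>a b. phihat la mu a b / la 0)"

lemma cf_zero: "degree p < i \<Longrightarrow> cf i p = 0"
  by (simp add: cf_def orthsys.Lf_orth_deg[OF w_sys])
lemma ch_zero: "degree p < i \<Longrightarrow> ch i p = 0"
  by (simp add: ch_def orthsys.Lf_orth_deg[OF wh_sys])

lemma ch_eq: "ch k p = Lf w (Qp la mu k * p) - Lf w (Qp la mu (Suc k) * p)"
proof -
  have "[:0,1:] * (Qp dla dmu k * p) = smult (la k * ppi k) (Qp la mu k * p - Qp la mu (Suc k) * p)"
  proof -
    have "[:0,1:] * (Qp dla dmu k * p) = ([:0,1:] * Qp dla dmu k) * p" by (simp only: mult.assoc)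
    also have "\<dots> = smult (la k * ppi k) (Qp la mu k - Qp la mu (Suc k)) * p" by (simp only: xQh)
    finally show ?thesis by (simp only: mult_smult_left left_diff_distrib)
  qed
  then have "ch k p = pph k * (la k * ppi k) * (Lf w (Qp la mu k * p) - Lf w (Qp la mu (Suc k) * p)) / la 0"
    by (simp add: ch_def Lf_wh orthsys.Lf_smult[OF w_sys] orthsys.Lf_diff[OF w_sys])
  also have "pph k * (la k * ppi k) = la 0" using pih_pi[of k] by (simp add: mult_ac)
  finally show ?thesis using la_pos[of 0] by simp
qed

lemma F1: "cf i p = (\<Sum>k. phi la mu i k * ch k p)"
proof -
  define N where "N = degree p"
  define a where "a k = Lf w (Qp la mu k * p)" for k
  have "(\<Sum>k. phi la mu i k * ch k p) = (\<Sum>k\<le>N. phi la mu i k * ch k p)"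
    by (rule suminf_finite) (auto simp: ch_zero N_def)
  also have "\<dots> = (\<Sum>k\<le>N. if i \<le> k then ppi i * (a k - a (Suc k)) else 0)"
    by (intro sum.cong) (auto simp: phi_def ch_eq a_def)
  also have "\<dots> = cf i p"
  proof (cases "i \<le> N")
    case True
    have "(\<Sum>k\<le>N. if i \<le> k then ppi i * (a k - a (Suc k)) else 0) = (\<Sum>k\<in>{i..N}. ppi i * (a k - a (Suc k)))"
      by (rule sum.mono_neutral_cong_right) auto
    also have "\<dots> = ppi i * (\<Sum>k\<in>{i..N}. a k - a (Suc k))" by (simp add: sum_distrib_left)
    also have "(\<Sum>k\<in>{i..N}. a k - a (Suc k)) = a i - a (Suc N)"
      using sum_Suc_diff[of i N "\<lambda>k. - a k"] True by simp
    also have "a (Suc N) = 0" by (simp add: a_def N_def orthsys.Lf_orth_deg[OF w_sys])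
    finally show ?thesis by (simp add: cf_def a_def)
  next
    case False
    then show ?thesis by (simp add: cf_zero N_def)
  qed
  finally show ?thesis ..
qed

lemma Lf_Qh_1: "Lf w (Qp dla dmu k) = 1"
  using LQQh[of 0 k] by simp

lemma F2: "ch k (poly_shift 1 p) = (\<Sum>l. phh k l * cf l p)"
proof -
  define N where "N = degree p"
  define M where "M = max k N"
  define b where "b l = cf l p" for l
  have bz: "b l = 0" if "N < l" for l using that by (simp add: b_def cf_zero N_def)
  have "(\<Sum>l. phh k l * cf l p) = (\<Sum>l\<le>M. phh k l * cf l p)"
    by (rule suminf_finite) (auto simp: cf_zero N_def M_def)
  also have "\<dots> = (\<Sum>l\<le>M. if k < l then - (pph k / la 0) * b l else 0)"
    by (intro sum.cong) (auto simp: phihat_def b_def)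
  also have "\<dots> = - (pph k / la 0) * (\<Sum>l\<in>{k<..M}. b l)"
    by (subst sum_distrib_left, rule sum.mono_neutral_cong_right) auto
  finally have R: "(\<Sum>l. phh k l * cf l p) = - (pph k / la 0) * (\<Sum>l\<in>{k<..M}. b l)" .
  have p0: "p = [:coeff p 0:] + [:0,1:] * poly_shift 1 p"
    by (subst (1) poly_shift_pCons[of p, symmetric]) (simp add: pCons_eq_iff)
  have sh: "[:0,1:] * poly_shift 1 p = p - [:coeff p 0:]" using p0 by (simp add: algebra_simps)
  have "ch k (poly_shift 1 p) = pph k * Lf w (Qp dla dmu k * ([:0,1:] * poly_shift 1 p)) / la 0"
    by (simp add: ch_def Lf_wh mult_ac)
  also have "Lf w (Qp dla dmu k * ([:0,1:] * poly_shift 1 p)) = Lf w (Qp dla dmu k * p) - coeff p 0 * Lf w (Qp dla dmu k)"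
  proof -
    have e: "Qp dla dmu k * ([:0,1:] * poly_shift 1 p) = Qp dla dmu k * p - smult (coeff p 0) (Qp dla dmu k)"
      by (simp only: sh right_diff_distrib) simp
    show ?thesis by (simp only: e orthsys.Lf_diff[OF w_sys] orthsys.Lf_smult[OF w_sys])
  qed
  also have "Lf w (Qp dla dmu k * p) = (\<Sum>m\<le>k. b m)"
    by (simp add: Qh_sum b_def cf_def sum_distrib_right orthsys.Lf_sum[OF w_sys] orthsys.Lf_smult[OF w_sys])
  also have "coeff p 0 = (\<Sum>l\<le>M. b l)"
  proof -
    have "coeff p 0 = poly p 0" by (simp add: poly_0_coeff_0)
    also have "\<dots> = (\<Sum>l\<le>M. b l * poly (Qp la mu l) 0)"
      by (subst (1) orthsys.Lf_expand[OF w_sys, of p M]) (auto simp: M_def N_def poly_sum_gen b_def cf_def)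
    finally show ?thesis by (simp add: Q_at0)
  qed
  also have "(\<Sum>l\<le>M. b l) = (\<Sum>m\<le>k. b m) + (\<Sum>l\<in>{k<..M}. b l)"
  proof -
    have "{..M} = {..k} \<union> {k<..M}" by (auto simp: M_def)
    then show ?thesis by (simp only:) (rule sum.union_disjoint, auto)
  qed
  finally show ?thesis using R by (simp add: Lf_Qh_1 field_simps)
qed


lemma cf_Qh: "cf i (Qp dla dmu j) = phi la mu i j"
  by (simp add: cf_def LQQh phi_def)

lemma cf_Q: "cf l (Qp la mu j) = (if l = j then 1 else 0)"
  using pi_pos[of j] by (simp add: cf_def orthsys.Lf_orth[OF w_sys])

lemma kconv_F1: "(\<And>k j. G k j = ch k (P j)) \<Longrightarrow> kconv (phi la mu) G i j = cf i (P j)"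
  by (simp add: kconv_def F1)

lemma kconv_F2: "(\<And>k j. G k j = cf k (P j)) \<Longrightarrow> kconv phh G i j = ch i (poly_shift 1 (P j))"
  unfolding kconv_def using F2[of i "P j"] by simp

lemma kernels: "kconv_list (concat (replicate n [phi la mu, phh]) @ [phi la mu]) i j = cf i (poly_shift n (Qp dla dmu j))
  \<and> kconv_list (concat (replicate n [phh, phi la mu]) @ [phh]) i j = ch i (poly_shift (Suc n) (Qp la mu j))
  \<and> kconv_list (concat (replicate (Suc n) [phi la mu, phh])) i j = cf i (poly_shift (Suc n) (Qp la mu j))
  \<and> kconv_list (concat (replicate (Suc n) [phh, phi la mu])) i j = ch i (poly_shift (Suc n) (Qp dla dmu j))"
proof (induction n arbitrary: i j)
  case 0
  have c2: "kconv_list [phi la mu] i j = cf i (Qp dla dmu j)" for i j by (simp add: cf_Qh)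
  have c4: "kconv_list [phh] i j = ch i (poly_shift 1 (Qp la mu j))" for i j
  proof -
    have "ch i (poly_shift 1 (Qp la mu j)) = (\<Sum>l. phh i l * cf l (Qp la mu j))" by (rule F2)
    also have "\<dots> = (\<Sum>l. if l = j then phh i j else 0)"
      by (intro suminf_cong) (simp add: cf_Q)
    also have "\<dots> = phh i j" by (subst suminf_finite[of "{j}"]) auto
    finally show ?thesis by simp
  qed
  have c1: "kconv_list [phi la mu, phh] i j = cf i (poly_shift 1 (Qp la mu j))"
    by (simp, rule kconv_F1) (use c4 in simp)
  have c3: "kconv_list [phh, phi la mu] i j = ch i (poly_shift 1 (Qp dla dmu j))"
    by (subst kconv_list_Cons, simp, simp only: kconv_list.simps(2), rule kconv_F2) (use c2 in simp)
  show ?case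
    apply (intro conjI)
    using c2 apply simp
    using c4 apply simp
    using c1 apply simp
    using c3 apply simp
    done
next
  case (Suc n)
  have L2: "concat (replicate (Suc n) [phi la mu, phh]) @ [phi la mu] = phi la mu # concat (replicate (Suc n) [phh, phi la mu])"
    by (simp add: concat_rep_swap[symmetric])
  have c2: "kconv_list (concat (replicate (Suc n) [phi la mu, phh]) @ [phi la mu]) i j = cf i (poly_shift (Suc n) (Qp dla dmu j))" for i j
    unfolding L2 by (subst kconv_list_Cons, simp, rule kconv_F1) (use Suc.IH in simp)
  have L4: "concat (replicate (Suc n) [phh, phi la mu]) @ [phh] = phh # concat (replicate (Suc n) [phi la mu, phh])"
    by (simp add: concat_rep_swap[symmetric])
  have c4: "kconv_list (concat (replicate (Suc n) [phh, phi la mu]) @ [phh]) i j = ch i (poly_shift (Suc (Suc n)) (Qp la mu j))" for i j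
  proof -
    have "kconv_list (concat (replicate (Suc n) [phh, phi la mu]) @ [phh]) i j = ch i (poly_shift 1 (poly_shift (Suc n) (Qp la mu j)))"
      unfolding L4 by (subst kconv_list_Cons, simp, rule kconv_F2) (use Suc.IH in simp)
    then show ?thesis by (simp add: poly_shift_shift)
  qed
  have L1: "concat (replicate (Suc (Suc n)) [phi la mu, phh]) = phi la mu # (concat (replicate (Suc n) [phh, phi la mu]) @ [phh])"
    by (simp add: concat_rep_swap)
  have c1: "kconv_list (concat (replicate (Suc (Suc n)) [phi la mu, phh])) i j = cf i (poly_shift (Suc (Suc n)) (Qp la mu j))" for i j
    unfolding L1 by (subst kconv_list_Cons, simp, rule kconv_F1) (use c4 in simp)
  have L3: "concat (replicate (Suc (Suc n)) [phh, phi la mu]) = phh # (concat (replicate (Suc n) [phi la mu, phh]) @ [phi la mu])"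
    by (simp add: concat_rep_swap)
  have c3: "kconv_list (concat (replicate (Suc (Suc n)) [phh, phi la mu])) i j = ch i (poly_shift (Suc (Suc n)) (Qp dla dmu j))" for i j
  proof -
    have "kconv_list (concat (replicate (Suc (Suc n)) [phh, phi la mu])) i j = ch i (poly_shift 1 (poly_shift (Suc n) (Qp dla dmu j)))"
      unfolding L3 by (subst kconv_list_Cons, simp, rule kconv_F2) (use c2 in simp)
    then show ?thesis by (simp add: poly_shift_shift)
  qed
  show ?case using c1 c2 c3 c4 by simp
qed

end

lemma poly_holo: "(\<lambda>u. poly p u) holomorphic_on A"
  by (simp add: poly_altdef) (intro holomorphic_intros)

lemma evp_holo: "(\<lambda>u. evp p u :: complex) holomorphic_on A"
  unfolding evp_def by (rule poly_holo)

locale loop =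
  fixes \<gamma> :: "real \<Rightarrow> complex"
  assumes vp: "valid_path \<gamma>" and cl: "pathfinish \<gamma> = pathstart \<gamma>"
begin

lemma ci_inv:
  assumes "z \<notin> path_image \<gamma>" "winding_number \<gamma> z = 1"
  shows "((\<lambda>u. 1 / (u - z)) has_contour_integral (2 * pi * \<i>)) \<gamma>"
proof -
  have "contour_integral \<gamma> (\<lambda>w. 1 / (w - z)) = 2 * pi * \<i>"
    using winding_number_valid_path[OF vp assms(1)] assms(2) by (simp add: field_simps)
  then show ?thesis
    using has_contour_integral_integral[OF contour_integrable_inversediff[OF vp assms(1)]] by simp
qed

lemma ci_entire: "f holomorphic_on UNIV \<Longrightarrow> (f has_contour_integral 0) \<gamma>"
  by (rule Cauchy_theorem_global[of UNIV]) (auto simp: vp cl)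

lemma ci_pow:
  assumes m: "m \<ge> 2" and z: "0 \<notin> path_image \<gamma>"
  shows "((\<lambda>u. 1 / u ^ m) has_contour_integral 0) \<gamma>"
proof -
  define k :: int where "k = 1 - int m"
  have k0: "k \<noteq> 0" using m by (simp add: k_def)
  define F where "F u = u powi k / of_int k" for u :: complex
  have d: "(F has_field_derivative (u powi (k - 1))) (at u within - {0})" if "u \<in> - {0}" for u
  proof -
    have "((\<lambda>u. u powi k) has_field_derivative (of_int k * u powi (k - 1) * 1)) (at u within - {0})"
      by (rule DERIV_power_int) (use that in \<open>auto intro: derivative_eq_intros\<close>)
    then have "((\<lambda>u. u powi k / of_int k) has_field_derivative (of_int k * u powi (k - 1) * 1) / of_int k) (at u within - {0})"
      by (rule DERIV_cdivide)
    then show ?thesis using k0 by (simp add: F_def[abs_def])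
  qed
  have "((\<lambda>u. u powi (k - 1)) has_contour_integral (F (pathfinish \<gamma>) - F (pathstart \<gamma>))) \<gamma>"
    by (rule contour_integral_primitive[OF d vp]) (use z in auto)
  then have "((\<lambda>u. u powi (k - 1)) has_contour_integral 0) \<gamma>" by (simp add: cl)
  then show ?thesis
  proof (rule has_contour_integral_eq)
    fix u assume "u \<in> path_image \<gamma>"
    have "k - 1 = - int m" by (simp add: k_def)
    then show "u powi (k - 1) = 1 / u ^ m" by (simp add: power_int_minus divide_inverse)
  qed
qed

lemma ci_recip:
  assumes z: "0 \<notin> path_image \<gamma>" "winding_number \<gamma> 0 = 1"
  shows "((\<lambda>u. 1 / u) has_contour_integral (2 * pi * \<i>)) \<gamma>"
  using ci_inv[OF z] by simp


lemma ci_I: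
  assumes z: "0 \<notin> path_image \<gamma>" "winding_number \<gamma> 0 = 1"
    and a: "a \<notin> path_image \<gamma>" "winding_number \<gamma> a = 1"
    and m: "m \<ge> 1"
  shows "((\<lambda>u. 1 / (u ^ m * (a - u))) has_contour_integral 0) \<gamma>"
proof (cases "a = 0")
  case True
  have "((\<lambda>u. - (1 / u ^ Suc m)) has_contour_integral - 0) \<gamma>"
    by (rule has_contour_integral_neg, rule ci_pow) (use m z in auto)
  then have "((\<lambda>u. - (1 / u ^ Suc m)) has_contour_integral 0) \<gamma>" by simp
  then show ?thesis
  proof (rule has_contour_integral_eq)
    fix u assume "u \<in> path_image \<gamma>"
    then have "u \<noteq> 0" using z by auto
    then show "- (1 / u ^ Suc m) = 1 / (u ^ m * (a - u))" using True by (simp add: field_simps)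
  qed
next
  case False
  have ia: "((\<lambda>u. 1 / (a - u)) has_contour_integral - (2 * pi * \<i>)) \<gamma>"
    using has_contour_integral_neg[OF ci_inv[OF a]]
    by (rule has_contour_integral_eq) (auto simp: divide_simps)
  show ?thesis using m
  proof (induction m rule: dec_induct)
    case base
    have "((\<lambda>u. 1 / u + 1 / (a - u)) has_contour_integral (2 * pi * \<i> + - (2 * pi * \<i>))) \<gamma>"
      by (rule has_contour_integral_add[OF ci_recip[OF z] ia])
    then have "((\<lambda>u. (1 / u + 1 / (a - u)) / a) has_contour_integral 0 / a) \<gamma>"
      by (intro has_contour_integral_div) simp
    then have "((\<lambda>u. (1 / u + 1 / (a - u)) / a) has_contour_integral 0) \<gamma>" by simp
    then show ?case
    proof (rule has_contour_integral_eq)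
      fix u assume u: "u \<in> path_image \<gamma>"
      then have "u \<noteq> 0" "u \<noteq> a" using z a by auto
      then show "(1 / u + 1 / (a - u)) / a = 1 / (u ^ 1 * (a - u))"
        using False by (simp add: field_simps)
    qed
  next
    case (step m)
    have "((\<lambda>u. 1 / u ^ Suc m + 1 / (u ^ m * (a - u))) has_contour_integral (0 + 0)) \<gamma>"
      by (rule has_contour_integral_add[OF ci_pow step.IH]) (use step z in auto)
    then have "((\<lambda>u. (1 / u ^ Suc m + 1 / (u ^ m * (a - u))) / a) has_contour_integral 0 / a) \<gamma>"
      by (intro has_contour_integral_div) simp
    then have "((\<lambda>u. (1 / u ^ Suc m + 1 / (u ^ m * (a - u))) / a) has_contour_integral 0) \<gamma>" by simp
    then show ?case
    proof (rule has_contour_integral_eq)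
      fix u assume u: "u \<in> path_image \<gamma>"
      then have "u \<noteq> 0" "u \<noteq> a" using z a by auto
      then show "(1 / u ^ Suc m + 1 / (u ^ m * (a - u))) / a = 1 / (u ^ Suc m * (a - u))"
        using False by (simp add: field_simps)
    qed
  qed
qed

lemma ci_point:
  assumes z: "0 \<notin> path_image \<gamma>" "winding_number \<gamma> 0 = 1"
    and a: "a \<notin> path_image \<gamma>" "winding_number \<gamma> a = 1"
  shows "((\<lambda>u. evp q u / ((a - u) * u ^ n)) has_contour_integral (- (2 * pi * \<i>) * evp (poly_shift n q) a)) \<gamma>"
proof -
  define P where "P = poly_shift n q"
  define Pc where "Pc = map_poly (of_real :: real \<Rightarrow> complex) P"
  define D where "D = synthetic_div Pc a"
  have PcE: "poly Pc u = evp P u" for u by (simp add: Pc_def evp_def)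
  have Dd: "poly Pc u = (u - a) * poly D u + poly Pc a" for u
  proof -
    have "poly Pc u = poly ([:-a, 1:] * D + [:poly Pc a:]) u"
      by (simp only: D_def synthetic_div_correct')
    then show ?thesis by (simp add: algebra_simps)
  qed
  have i1: "((\<lambda>u. \<Sum>k<n. of_real (coeff q k) * (1 / (u ^ (n - k) * (a - u)))) has_contour_integral
        (\<Sum>k<n. of_real (coeff q k) * 0)) \<gamma>"
    by (intro has_contour_integral_sum has_contour_integral_lmul ci_I[OF z a]) auto
  have i2: "((\<lambda>u. - poly D u) has_contour_integral - 0) \<gamma>"
    by (intro has_contour_integral_neg ci_entire poly_holo)
  have i3: "((\<lambda>u. - poly Pc a * (1 / (u - a))) has_contour_integral (- poly Pc a * (2 * pi * \<i>))) \<gamma>"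
    by (intro has_contour_integral_lmul ci_inv[OF a])
  have "((\<lambda>u. (\<Sum>k<n. of_real (coeff q k) * (1 / (u ^ (n - k) * (a - u)))) + - poly D u + - poly Pc a * (1 / (u - a)))
      has_contour_integral ((\<Sum>k<n. of_real (coeff q k) * 0) + - 0 + - poly Pc a * (2 * pi * \<i>))) \<gamma>"
    by (intro has_contour_integral_add i1 i2 i3)
  then have "((\<lambda>u. (\<Sum>k<n. of_real (coeff q k) * (1 / (u ^ (n - k) * (a - u)))) + - poly D u + - poly Pc a * (1 / (u - a)))
      has_contour_integral (- (2 * pi * \<i>) * evp (poly_shift n q) a)) \<gamma>"
    by (simp add: PcE P_def mult.commute)
  then show ?thesis
  proof (rule has_contour_integral_eq)
    fix u assume u: "u \<in> path_image \<gamma>"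
    then have u0: "u \<noteq> 0" and ua: "u \<noteq> a" using z a by auto
    have e1: "evp q u = (\<Sum>k<n. of_real (coeff q k) * u ^ k) + u ^ n * evp P u"
      unfolding P_def by (rule evp_shift)
    have e2: "(\<Sum>k<n. of_real (coeff q k) * u ^ k) / ((a - u) * u ^ n)
        = (\<Sum>k<n. of_real (coeff q k) * (1 / (u ^ (n - k) * (a - u))))"
      unfolding sum_divide_distrib
    proof (rule sum.cong, simp)
      fix k assume "k \<in> {..<n}"
      then have "u ^ n = u ^ k * u ^ (n - k)" by (simp add: power_add[symmetric])
      then show "of_real (coeff q k) * u ^ k / ((a - u) * u ^ n) = of_real (coeff q k) * (1 / (u ^ (n - k) * (a - u)))"
        using u0 ua by (simp add: field_simps)
    qed
    have e3: "u ^ n * evp P u / ((a - u) * u ^ n) = - poly D u + - poly Pc a * (1 / (u - a))"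
    proof -
      have "u ^ n * evp P u / ((a - u) * u ^ n) = evp P u / (a - u)" using u0 by simp
      also have "\<dots> = ((u - a) * poly D u + poly Pc a) / (a - u)" using Dd[of u] by (simp add: PcE)
      also have "\<dots> = - poly D u + - poly Pc a * (1 / (u - a))"
      proof -
        have "a - u \<noteq> 0" "u - a \<noteq> 0" using ua by auto
        then show ?thesis by (simp add: field_simps)
      qed
      finally show ?thesis .
    qed
    show "(\<Sum>k<n. of_real (coeff q k) * (1 / (u ^ (n - k) * (a - u)))) + - poly D u + - poly Pc a * (1 / (u - a))
        = evp q u / ((a - u) * u ^ n)"
      unfolding e1 add_divide_distrib e2 e3 by simp
  qed
qed

end

lemma alg1: "(a::complex) \<noteq> 0 \<Longrightarrow> c \<noteq> 0 \<Longrightarrow> F/a - F/c - (c-a)*(F/c^2) = (c-a)^2*(F/(a*c^2))"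
  by (simp add: field_simps power2_eq_square)

lemma HK_leb:
  assumes "continuous_on {0..1} (h :: real \<Rightarrow> complex)"
  shows "(\<integral>t. indicator {0..1} t *\<^sub>R h t \<partial>lborel) = integral {0..1} h"
proof -
  have si: "set_integrable lborel {0..1} h"
    unfolding set_integrable_def by (rule borel_integrable_compact) (auto simp: assms)
  show ?thesis using set_borel_integral_eq_integral(2)[OF si] by (simp add: set_lebesgue_integral_def)
qed

definition c1 :: "real \<Rightarrow> real" where "c1 t = max 0 (min 1 t)"
lemma c1_in: "c1 t \<in> {0..1}" by (auto simp: c1_def)
lemma c1_c1[simp]: "c1 (c1 t) = c1 t" by (auto simp: c1_def)
lemma c1_id: "t \<in> {0..1} \<Longrightarrow> c1 t = t" by (auto simp: c1_def)
lemma c1_cont[continuous_intros]: "continuous_on s g \<Longrightarrow> continuous_on s (\<lambda>x. c1 (g x))"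
  unfolding c1_def by (intro continuous_intros)

locale cmeas =
  fixes M :: "real measure" and b :: real
  assumes fin: "finite_measure M" and sM: "sets M = sets borel" and b0: "0 \<le> b"
    and AEb: "AE x in M. x \<in> {0..b}"
begin

definition K :: "complex set" where "K = complex_of_real ` {0..b}"
definition cl :: "real \<Rightarrow> real" where "cl x = max 0 (min b x)"

lemma K_compact: "compact K"
  unfolding K_def by (intro compact_continuous_image continuous_intros) auto

lemma S_open: "open (- K)" using K_compact by (simp add: open_Compl compact_imp_closed)

lemma zero_K: "0 \<in> K" using b0 by (auto simp: K_def)

lemma cl_in: "cl x \<in> {0..b}" using b0 by (auto simp: cl_def)
lemma cl_cl[simp]: "cl (cl x) = cl x" using b0 by (auto simp: cl_def)
lemma cl_id: "x \<in> {0..b} \<Longrightarrow> cl x = x" by (auto simp: cl_def)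
lemma cl_cont: "continuous_on A cl" unfolding cl_def by (intro continuous_intros)
lemma cl_cont'[continuous_intros]: "continuous_on s g \<Longrightarrow> continuous_on s (\<lambda>x. cl (g x))"
  unfolding cl_def by (intro continuous_intros)
lemma AE_cl: "AE x in M. cl x = x" using AEb by (auto simp: cl_def elim!: AE_mp)
lemma clK: "complex_of_real (cl x) \<in> K" using cl_in by (auto simp: K_def)

lemma meas: "continuous_on UNIV h \<Longrightarrow> h \<in> borel_measurable M"
  using borel_measurable_continuous_onI measurable_cong_sets sM by blast

lemma int_bdd: "continuous_on UNIV (h :: real \<Rightarrow> complex) \<Longrightarrow> (\<And>x. norm (h x) \<le> B) \<Longrightarrow> integrable M h"
  by (rule finite_measure.integrable_const_bound[OF fin, where B=B]) (auto intro: meas)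

lemma bdd_cont: "continuous_on {0..b} (f :: real \<Rightarrow> 'a::real_normed_vector) \<Longrightarrow> \<exists>B. \<forall>x. norm (f (cl x)) \<le> B"
proof -
  assume c: "continuous_on {0..b} f"
  have "compact (f ` {0..b})" by (rule compact_continuous_image[OF c]) simp
  then obtain B where "\<forall>y\<in>f ` {0..b}. norm y \<le> B" using compact_imp_bounded bounded_iff by metis
  then show ?thesis using cl_in by blast
qed

lemma dist_K:
  assumes "u \<in> - K"
  obtains e where "e > 0" "\<And>x. norm (complex_of_real (cl x) - u) \<ge> e"
proof -
  obtain e where e: "e > 0" "ball u e \<subseteq> - K" using S_open assms open_contains_ball by blast
  have "norm (complex_of_real (cl x) - u) \<ge> e" for x
  proof (rule ccontr)
    assume "\<not> ?thesis"
    then have "complex_of_real (cl x) \<in> ball u e" by (simp add: dist_norm norm_minus_commute)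
    then show False using e clK by auto
  qed
  then show ?thesis using that e by blast
qed

definition St :: "(real \<Rightarrow> real) \<Rightarrow> complex \<Rightarrow> complex" where
  "St f u = (\<integral>x. complex_of_real (f (cl x)) / (complex_of_real (cl x) - u) \<partial>M)"

lemma cont_quot:
  assumes f: "continuous_on UNIV f" and u: "u \<in> - K"
  shows "continuous_on UNIV (\<lambda>x. complex_of_real (f (cl x)) / (complex_of_real (cl x) - u))"
proof -
  have "complex_of_real (cl x) - u \<noteq> 0" for x using u clK by auto
  then show ?thesis
    by (intro continuous_intros continuous_on_compose2[OF f cl_cont] continuous_on_compose2[OF continuous_on_of_real cl_cont]) auto
qed


lemma int_cl:
  assumes H: "continuous_on {0..b} (H :: real \<Rightarrow> complex)"
  shows "integrable M (\<lambda>x. H (cl x))"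
proof -
  obtain B where B: "\<And>x. norm (H (cl x)) \<le> B" using bdd_cont[OF H] by blast
  have "continuous_on UNIV (\<lambda>x. H (cl x))"
    by (rule continuous_on_compose2[OF H cl_cont]) (use cl_in in auto)
  then show ?thesis using int_bdd B by blast
qed

lemma norm_int_le:
  assumes "integrable M (h :: real \<Rightarrow> complex)" "\<And>x. norm (h x) \<le> B"
  shows "norm (\<integral>x. h x \<partial>M) \<le> B * measure M (space M)"
proof -
  have "norm (\<integral>x. h x \<partial>M) \<le> (\<integral>x. norm (h x) \<partial>M)" by (rule integral_norm_bound)
  also have "\<dots> \<le> (\<integral>x. B \<partial>M)"
    by (rule integral_mono) (use assms finite_measure.integrable_const[OF fin] in auto)
  also have "\<dots> = B * measure M (space M)" by (simp add: mult.commute)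
  finally show ?thesis .
qed

lemma St_deriv:
  assumes f: "continuous_on UNIV f" and u: "u \<in> - K"
  shows "(St f has_field_derivative (\<integral>x. complex_of_real (f (cl x)) / (complex_of_real (cl x) - u)^2 \<partial>M)) (at u)"
proof -
  obtain e where e: "e > 0" "\<And>x. norm (complex_of_real (cl x) - u) \<ge> e" using dist_K[OF u] by blast
  have fb: "continuous_on {0..b} f" using f continuous_on_subset by blast
  obtain Bf where Bf: "\<And>x. norm (f (cl x)) \<le> Bf" using bdd_cont[OF fb] by blast
  have ey: "norm (complex_of_real y - u) \<ge> e" if "y \<in> {0..b}" for y
    using e(2)[of y] that by (simp add: cl_def)
  have ev: "norm (complex_of_real y - v) \<ge> e / 2" if "y \<in> {0..b}" "dist v u < e / 2" for y v
  proof -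
    have "norm (complex_of_real y - u) \<le> norm (complex_of_real y - v) + norm (v - u)"
      by (rule order_trans[OF _ norm_triangle_ineq]) simp
    then show ?thesis using ey[OF that(1)] that(2) by (simp add: dist_norm)
  qed
  define D where "D = (\<integral>x. complex_of_real (f (cl x)) / (complex_of_real (cl x) - u)^2 \<partial>M)"
  define R where "R v = (\<integral>x. complex_of_real (f (cl x)) / ((complex_of_real (cl x) - v) * (complex_of_real (cl x) - u)^2) \<partial>M)" for v
  define C where "C = Bf / (e / 2 * e^2) * measure M (space M)"
  have nz: "complex_of_real y - v \<noteq> 0" if "y \<in> {0..b}" "dist v u < e / 2" for y v
    using ev[OF that] e(1) by auto
  have nzu: "complex_of_real y - u \<noteq> 0" if "y \<in> {0..b}" for y
    using ey[OF that] e(1) by auto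
  have key: "St f v - St f u - (v - u) * D = (v - u)^2 * R v" if v: "dist v u < e / 2" for v
  proof -
    have i1: "integrable M (\<lambda>x. complex_of_real (f (cl x)) / (complex_of_real (cl x) - v))"
      by (rule int_cl[of "\<lambda>y. complex_of_real (f y) / (complex_of_real y - v)"])
         (use nz[OF _ v] fb in \<open>auto intro!: continuous_intros continuous_on_compose2[OF continuous_on_of_real fb]\<close>)
    have i2: "integrable M (\<lambda>x. complex_of_real (f (cl x)) / (complex_of_real (cl x) - u))"
      by (rule int_cl[of "\<lambda>y. complex_of_real (f y) / (complex_of_real y - u)"])
         (use nzu fb in \<open>auto intro!: continuous_intros continuous_on_compose2[OF continuous_on_of_real fb]\<close>)
    have i3: "integrable M (\<lambda>x. (v - u) * (complex_of_real (f (cl x)) / (complex_of_real (cl x) - u)^2))"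
      by (rule int_cl[of "\<lambda>y. (v - u) * (complex_of_real (f y) / (complex_of_real y - u)^2)"])
         (use nzu fb in \<open>auto intro!: continuous_intros continuous_on_compose2[OF continuous_on_of_real fb]\<close>)
    have "St f v - St f u - (v - u) * D = (\<integral>x. complex_of_real (f (cl x)) / (complex_of_real (cl x) - v)
         - complex_of_real (f (cl x)) / (complex_of_real (cl x) - u)
         - (v - u) * (complex_of_real (f (cl x)) / (complex_of_real (cl x) - u)^2) \<partial>M)"
    proof -
      have "(v - u) * D = (\<integral>x. (v - u) * (complex_of_real (f (cl x)) / (complex_of_real (cl x) - u)^2) \<partial>M)"
        unfolding D_def by (rule integral_mult_right_zero[symmetric])
      then show ?thesis unfolding St_def
        by (simp only: Bochner_Integration.integral_diff[OF i1 i2, symmetric] Bochner_Integration.integral_diff[OF Bochner_Integration.integrable_diff[OF i1 i2] i3, symmetric])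
    qed
    also have "\<dots> = (\<integral>x. (v - u)^2 * (complex_of_real (f (cl x)) / ((complex_of_real (cl x) - v) * (complex_of_real (cl x) - u)^2)) \<partial>M)"
    proof (rule Bochner_Integration.integral_cong, simp)
      fix x
      have a: "complex_of_real (cl x) - v \<noteq> 0" using nz[OF cl_in v] .
      have c: "complex_of_real (cl x) - u \<noteq> 0" using nzu[OF cl_in] .
      show "complex_of_real (f (cl x)) / (complex_of_real (cl x) - v)
         - complex_of_real (f (cl x)) / (complex_of_real (cl x) - u)
         - (v - u) * (complex_of_real (f (cl x)) / (complex_of_real (cl x) - u)^2)
         = (v - u)^2 * (complex_of_real (f (cl x)) / ((complex_of_real (cl x) - v) * (complex_of_real (cl x) - u)^2))"
      proof -
        have vu: "v - u = (complex_of_real (cl x) - u) - (complex_of_real (cl x) - v)" by simp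
        show ?thesis unfolding vu by (rule alg1[OF a c])
      qed
    qed
    also have "\<dots> = (v - u)^2 * R v" unfolding R_def by (rule integral_mult_right_zero)
    finally show ?thesis .
  qed
  have bound: "norm (R v) \<le> C" if v: "dist v u < e / 2" for v
  proof -
    have i: "integrable M (\<lambda>x. complex_of_real (f (cl x)) / ((complex_of_real (cl x) - v) * (complex_of_real (cl x) - u)^2))"
      by (rule int_cl[of "\<lambda>y. complex_of_real (f y) / ((complex_of_real y - v) * (complex_of_real y - u)^2)"])
         (use nz[OF _ v] nzu fb in \<open>auto intro!: continuous_intros continuous_on_compose2[OF continuous_on_of_real fb]\<close>)
    have "norm (complex_of_real (f (cl x)) / ((complex_of_real (cl x) - v) * (complex_of_real (cl x) - u)^2)) \<le> Bf / (e / 2 * e^2)" for x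
    proof -
      have n1: "norm (complex_of_real (cl x) - v) \<ge> e / 2" using ev[OF cl_in v] .
      have n2: "norm (complex_of_real (cl x) - u) \<ge> e" using ey[OF cl_in] .
      have "e / 2 * e^2 \<le> norm (complex_of_real (cl x) - v) * norm (complex_of_real (cl x) - u)^2"
        using n1 n2 e(1) by (intro mult_mono power_mono) auto
      moreover have fB: "norm (complex_of_real (f (cl x))) \<le> Bf" using Bf[of x] by simp
      moreover have "0 < e / 2 * e^2" using e(1) by simp
      ultimately have "norm (complex_of_real (f (cl x))) / (norm (complex_of_real (cl x) - v) * norm (complex_of_real (cl x) - u)^2) \<le> Bf / (e / 2 * e^2)"
        by (intro frac_le) (auto intro: order_trans[OF norm_ge_zero fB])
      then show ?thesis by (simp add: norm_divide norm_mult norm_power)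
    qed
    then show ?thesis unfolding R_def C_def using norm_int_le[OF i] by blast
  qed
  have "((\<lambda>v. (St f v - St f u) / (v - u) - D) \<longlongrightarrow> 0) (at u)"
  proof (rule Lim_null_comparison)
    show "\<forall>\<^sub>F v in at u. norm ((St f v - St f u) / (v - u) - D) \<le> C * norm (v - u)"
    proof -
      have "\<forall>\<^sub>F v in at u. dist v u < e / 2" using e(1) by (auto simp: eventually_at intro!: exI[of _ "e/2"])
      moreover have "\<forall>\<^sub>F v in at u. v \<noteq> u" by (rule eventually_at_filter[THEN iffD2]) simp
      ultimately show ?thesis
      proof eventually_elim
        case (elim v)
        have "(St f v - St f u) / (v - u) - D = (St f v - St f u - (v - u) * D) / (v - u)"
          using elim by (simp add: field_simps)
        also have "\<dots> = (v - u) * R v" using key[OF elim(1)] elim(2) by (simp add: power2_eq_square)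
        moreover have "norm (v - u) * norm (R v) \<le> C * norm (v - u)" using bound[OF elim(1)] by (simp add: mult.commute mult_right_mono)
        ultimately show ?case by (simp add: norm_mult)
      qed
    qed
    show "((\<lambda>v. C * norm (v - u)) \<longlongrightarrow> 0) (at u)"
      by (intro tendsto_eq_intros) auto
  qed
  then have "((\<lambda>v. (St f v - St f u) / (v - u)) \<longlongrightarrow> D) (at u)"
    by (rule Lim_transform[rotated]) (auto intro: tendsto_const)
  then show ?thesis unfolding D_def by (simp add: has_field_derivative_iff)
qed

lemma St_holo: "continuous_on UNIV f \<Longrightarrow> St f holomorphic_on - K"
  using St_deriv S_open by (auto simp: holomorphic_on_open)

end

context cmeas
begin

lemma fubini_path:
  fixes f :: "real \<Rightarrow> real" and q :: "real poly" and p :: "real \<Rightarrow> complex"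
  assumes f: "continuous_on UNIV f" and pp: "polynomial_function p"
    and closed: "pathfinish p = pathstart p" and pim: "path_image p \<subseteq> - K"
    and wind: "\<And>a. a \<in> K \<Longrightarrow> winding_number p a = 1"
  shows "contour_integral p (\<lambda>u. evp q u * St f u / u ^ n)
     = - (2 * pi * \<i>) * of_real (\<integral>x. f (cl x) * poly (poly_shift n q) (cl x) \<partial>M)"
proof -
  obtain p' where pp': "polynomial_function p'" and pd: "\<And>t. (p has_vector_derivative p' t) (at t)"
    using has_vector_derivative_polynomial_function[OF pp] by blast
  have vp: "valid_path p" using pp by (rule valid_path_polynomial_function)
  interpret lp: loop p using vp closed by unfold_locales
  have pcont: "continuous_on UNIV p" by (rule continuous_on_polymonial_function[OF pp])
  have p'cont: "continuous_on UNIV p'" by (rule continuous_on_polymonial_function[OF pp'])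
  have pc: "continuous_on s (\<lambda>x. p (g x))" if "continuous_on s g" for s g
    by (rule continuous_on_compose2[OF pcont that]) auto
  have p'c: "continuous_on s (\<lambda>x. p' (g x))" if "continuous_on s g" for s g
    by (rule continuous_on_compose2[OF p'cont that]) auto
  have fc: "continuous_on s (\<lambda>x. f (g x))" if "continuous_on s g" for s g
    by (rule continuous_on_compose2[OF f that]) auto
  have evc: "continuous_on s (\<lambda>x. evp q (g x) :: complex)" if "continuous_on s g" for s g
    by (rule continuous_on_compose2[OF holomorphic_on_imp_continuous_on[OF evp_holo] that]) auto
  have pnK: "p t \<notin> K" if "t \<in> {0..1}" for t
  proof -
    have "p t \<in> path_image p" using that by (auto simp: path_image_def)
    then show ?thesis using pim by auto
  qed
  have pnz: "p t \<noteq> 0" if "t \<in> {0..1}" for t using pnK[OF that] zero_K by auto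
  have pimK: "a \<notin> path_image p" if "a \<in> K" for a using pim that by auto
  define \<Phi> where "\<Phi> y s = complex_of_real (f y) * (evp q (p s) / ((complex_of_real y - p s) * p s ^ n)) * p' s" for y s
  define H where "H z = \<Phi> (cl (fst z)) (c1 (snd z))" for z :: "real \<times> real"
  have dnz: "complex_of_real (cl y) - p (c1 s) \<noteq> 0" for y s
    using pnK[OF c1_in[of s]] clK[of y] by auto
  have Hc: "continuous_on UNIV H"
    unfolding H_def \<Phi>_def
    by (intro continuous_intros fc evc pc p'c) (use dnz pnz[OF c1_in] in auto)
  have Hbox: "H z = H (cl (fst z), c1 (snd z))" for z
    by (simp add: H_def)
  have "compact (H ` ({0..b} \<times> {0..1}))"
    by (rule compact_continuous_image[OF continuous_on_subset[OF Hc]]) (auto intro: compact_Times)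
  then obtain BH where BH: "\<And>w. w \<in> H ` ({0..b} \<times> {0..1}) \<Longrightarrow> norm w \<le> BH"
    using compact_imp_bounded bounded_iff by metis
  have Hb: "norm (H z) \<le> BH" for z
    by (subst Hbox, rule BH) (use cl_in c1_in in auto)
  have BH0: "0 \<le> BH" using Hb[of 0] norm_ge_zero order_trans by blast
  have vd: "vector_derivative p (at t) = p' t" for t using pd[of t] by (rule vector_derivative_at)
  define G where "G u = evp q u * St f u / u ^ n" for u
  have ci: "contour_integral p G = integral {0..1} (\<lambda>t. G (p t) * p' t)"
    by (simp add: contour_integral_integral vd)
  have Gholo: "G holomorphic_on - K"
    unfolding G_def using zero_K
    by (intro holomorphic_intros evp_holo St_holo[OF f]) auto
  have Gpc: "continuous_on {0..1} (\<lambda>t. G (p t) * p' t)"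
  proof (intro continuous_intros p'c)
    show "continuous_on {0..1} (\<lambda>t. G (p t))"
      by (rule continuous_on_compose2[OF holomorphic_on_imp_continuous_on[OF Gholo] pc[OF continuous_on_id]])
         (use pnK in auto)
  qed
  have Gx: "G (p t) * p' t = (\<integral>x. H (x, t) \<partial>M)" if t: "t \<in> {0..1}" for t
  proof -
    have "(\<integral>x. H (x, t) \<partial>M) = (\<integral>x. (evp q (p t) * p' t / p t ^ n) * (complex_of_real (f (cl x)) / (complex_of_real (cl x) - p t)) \<partial>M)"
      by (rule Bochner_Integration.integral_cong) (auto simp: H_def \<Phi>_def c1_id[OF t] field_simps)
    also have "\<dots> = (evp q (p t) * p' t / p t ^ n) * St f (p t)"
      unfolding St_def by (rule integral_mult_right_zero)
    finally show ?thesis by (simp add: G_def)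
  qed
  define \<Psi> where "\<Psi> x t = indicator {0..1} t *\<^sub>R H (x, t)" for x t
  have LHS: "(\<integral>t. (\<integral>x. \<Psi> x t \<partial>M) \<partial>lborel) = contour_integral p G"
  proof -
    have "(\<integral>x. \<Psi> x t \<partial>M) = indicator {0..1} t *\<^sub>R (G (p t) * p' t)" for t
      by (cases "t \<in> {0..1}") (auto simp: \<Psi>_def Gx)
    then have "(\<integral>t. (\<integral>x. \<Psi> x t \<partial>M) \<partial>lborel) = (\<integral>t. indicator {0..1} t *\<^sub>R (G (p t) * p' t) \<partial>lborel)"
      by simp
    also have "\<dots> = integral {0..1} (\<lambda>t. G (p t) * p' t)" by (rule HK_leb[OF Gpc])
    finally show ?thesis using ci by simp
  qed
  have inner: "(\<integral>t. \<Psi> x t \<partial>lborel) = complex_of_real (f (cl x)) * (- (2 * pi * \<i>) * evp (poly_shift n q) (complex_of_real (cl x)))" for x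
  proof -
    define a where "a = complex_of_real (cl x)"
    have aK: "a \<in> K" using clK by (simp add: a_def)
    define h where "h u = complex_of_real (f (cl x)) * (evp q u / ((a - u) * u ^ n))" for u
    have hc: "(h has_contour_integral complex_of_real (f (cl x)) * (- (2 * pi * \<i>) * evp (poly_shift n q) a)) p"
      unfolding h_def
      by (intro has_contour_integral_lmul lp.ci_point) (use pimK[OF zero_K] pimK[OF aK] wind[OF zero_K] wind[OF aK] in auto)
    have Hxc: "continuous_on {0..1} (\<lambda>t. H (x, t))"
      by (rule continuous_on_compose2[OF Hc]) (auto intro: continuous_intros)
    have "(\<integral>t. \<Psi> x t \<partial>lborel) = integral {0..1} (\<lambda>t. H (x, t))"
      unfolding \<Psi>_def by (rule HK_leb[OF Hxc])
    also have "\<dots> = integral {0..1} (\<lambda>t. h (p t) * vector_derivative p (at t))"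
      by (rule integral_cong) (auto simp: H_def \<Phi>_def h_def a_def c1_id vd)
    also have "\<dots> = contour_integral p h" by (simp add: contour_integral_integral)
    also have "\<dots> = complex_of_real (f (cl x)) * (- (2 * pi * \<i>) * evp (poly_shift n q) a)"
      by (rule contour_integral_unique[OF hc])
    finally show ?thesis by (simp add: a_def)
  qed
  have sP: "sets (M \<Otimes>\<^sub>M lborel) = sets (borel :: (real \<times> real) measure)"
  proof -
    have "sets (M \<Otimes>\<^sub>M lborel) = sets (borel \<Otimes>\<^sub>M (borel :: real measure))"
      by (rule sets_pair_measure_cong[OF sM sets_lborel])
    also have "(borel \<Otimes>\<^sub>M (borel :: real measure)) = (borel :: (real \<times> real) measure)"
      by (rule borel_prod)
    finally show ?thesis .
  qed
  have Hm[measurable]: "H \<in> borel_measurable (M \<Otimes>\<^sub>M lborel)"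
    using borel_measurable_continuous_onI[OF Hc] measurable_cong_sets[OF sP refl] by blast
  interpret pf: pair_sigma_finite M lborel
    unfolding pair_sigma_finite_def using fin lborel.sigma_finite_measure_axioms
    by (simp add: finite_measure_def)
  have spM: "space M = UNIV" using sets_eq_imp_space_eq[OF sM] by simp
  have intP: "integrable (M \<Otimes>\<^sub>M lborel) (case_prod \<Psi>)"
  proof (rule Bochner_Integration.integrable_bound)
    have mT: "UNIV \<times> {0..1::real} \<in> sets (M \<Otimes>\<^sub>M lborel)"
      using spM sets.top[of M] by (intro pair_measureI) auto
    have "emeasure (M \<Otimes>\<^sub>M lborel) (UNIV \<times> {0..1::real}) = emeasure M UNIV * emeasure lborel {0..1::real}"
      using spM sets.top[of M] by (intro lborel.emeasure_pair_measure_Times) auto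
    also have "\<dots> < \<infinity>" using finite_measure.emeasure_finite[OF fin, of UNIV] by (simp add: ennreal_mult_less_top top.not_eq_extremum)
    finally have "emeasure (M \<Otimes>\<^sub>M lborel) (UNIV \<times> {0..1::real}) < \<infinity>" .
    then show "integrable (M \<Otimes>\<^sub>M lborel) (\<lambda>z. BH * indicator (UNIV \<times> {0..1::real}) z)"
      using mT by (intro integrable_mult_right integrable_real_indicator) auto
    show "case_prod \<Psi> \<in> borel_measurable (M \<Otimes>\<^sub>M lborel)"
      unfolding \<Psi>_def split_beta' by measurable
    show "AE z in M \<Otimes>\<^sub>M lborel. norm (case_prod \<Psi> z) \<le> norm (BH * indicator (UNIV \<times> {0..1::real}) z)"
      using Hb BH0 by (auto simp: \<Psi>_def indicator_def split: prod.splits)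
  qed
  have "contour_integral p G = (\<integral>x. (\<integral>t. \<Psi> x t \<partial>lborel) \<partial>M)"
    using LHS pf.Fubini_integral[OF intP] by simp
  also have "\<dots> = (\<integral>x. - (2 * pi * \<i>) * complex_of_real (f (cl x) * poly (poly_shift n q) (cl x)) \<partial>M)"
    by (rule Bochner_Integration.integral_cong) (auto simp: inner evp_of_real)
  also have "\<dots> = - (2 * pi * \<i>) * of_real (\<integral>x. f (cl x) * poly (poly_shift n q) (cl x) \<partial>M)"
    by (simp only: integral_mult_right_zero integral_complex_of_real)
  finally show ?thesis by (simp add: G_def[abs_def])
qed

end

context cmeas
begin

lemma cont_main:
  fixes f :: "real \<Rightarrow> real" and q :: "real poly" and C :: "real \<Rightarrow> complex"
  assumes f: "continuous_on UNIV f" and vC: "valid_path C" and clC: "pathfinish C = pathstart C"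
    and CK: "\<And>z. z \<in> K \<Longrightarrow> z \<notin> path_image C \<and> winding_number C z = 1"
  shows "contour_integral C (\<lambda>u. (\<integral>x. complex_of_real (f x) * evp q u / (complex_of_real x - u) \<partial>M) / u ^ n)
     = - (2 * pi * \<i>) * of_real (\<integral>x. f x * poly (poly_shift n q) x \<partial>M)"
proof -
  define G where "G u = evp q u * St f u / u ^ n" for u
  have fm: "f \<in> borel_measurable M" by (rule meas[OF f])
  have Gholo: "G holomorphic_on - K"
    unfolding G_def using zero_K
    by (intro holomorphic_intros evp_holo St_holo[OF f]) auto
  have eqG: "(\<integral>x. complex_of_real (f x) * evp q u / (complex_of_real x - u) \<partial>M) / u ^ n = G u" for u
  proof -
    have "(\<integral>x. complex_of_real (f x) * evp q u / (complex_of_real x - u) \<partial>M)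
        = (\<integral>x. evp q u * (complex_of_real (f (cl x)) / (complex_of_real (cl x) - u)) \<partial>M)"
    proof (rule integral_cong_AE)
      show "(\<lambda>x. complex_of_real (f x) * evp q u / (complex_of_real x - u)) \<in> borel_measurable M"
      proof -
        have "(\<lambda>x. u) \<in> borel_measurable M" by simp
        then show ?thesis using fm meas[OF continuous_on_id] by measurable
      qed
      show "(\<lambda>x. evp q u * (complex_of_real (f (cl x)) / (complex_of_real (cl x) - u))) \<in> borel_measurable M"
      proof -
        have "(\<lambda>x. u) \<in> borel_measurable borel" by simp
        then have hm: "(\<lambda>y. evp q u * (complex_of_real (f y) / (complex_of_real y - u))) \<in> borel_measurable borel"
          using borel_measurable_continuous_onI[OF f] by measurable
        show ?thesis by (rule measurable_compose[OF meas[OF cl_cont] hm])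
      qed
      show "AE x in M. complex_of_real (f x) * evp q u / (complex_of_real x - u) = evp q u * (complex_of_real (f (cl x)) / (complex_of_real (cl x) - u))"
        using AE_cl by (auto elim!: AE_mp)
    qed
    also have "\<dots> = evp q u * St f u" unfolding St_def by (rule integral_mult_right_zero)
    finally show ?thesis by (simp add: G_def)
  qed
  have pC: "path C" using vC by (rule valid_path_imp_path)
  have CiK: "path_image C \<subseteq> - K" using CK by auto
  obtain d where d: "d > 0" and dprop: "\<And>g h. valid_path g \<and> valid_path h \<and>
        (\<forall>t\<in>{0..1}. cmod (g t - C t) < d \<and> cmod (h t - C t) < d) \<and>
        pathstart h = pathstart g \<and> pathfinish h = pathfinish g \<Longrightarrow>
        path_image g \<subseteq> - K \<and> path_image h \<subseteq> - K \<and>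
        (\<forall>f. f holomorphic_on - K \<longrightarrow> contour_integral h f = contour_integral g f)"
    using contour_integral_nearby_ends[OF S_open pC CiK] by blast
  obtain p where pp: "polynomial_function p" and ps: "pathstart p = pathstart C" and pf: "pathfinish p = pathfinish C"
    and pn: "\<And>t. t \<in> {0..1} \<Longrightarrow> norm (p t - C t) < d"
    using path_approx_polynomial_function[OF pC d] by metis
  have vp: "valid_path p" using pp by (rule valid_path_polynomial_function)
  have near: "path_image p \<subseteq> - K \<and> (\<forall>f. f holomorphic_on - K \<longrightarrow> contour_integral p f = contour_integral C f)"
    using dprop[of C p] vC vp pn ps pf d by auto
  have clp: "pathfinish p = pathstart p" using ps pf clC by simp
  have wp: "winding_number p a = 1" if a: "a \<in> K" for a
  proof -
    have h: "(\<lambda>w. 1 / (w - a)) holomorphic_on - K" using a by (intro holomorphic_intros) auto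
    have "a \<notin> path_image p" using near a by auto
    then have "winding_number p a = 1 / (2 * pi * \<i>) * contour_integral p (\<lambda>w. 1 / (w - a))"
      by (rule winding_number_valid_path[OF vp])
    also have "\<dots> = 1 / (2 * pi * \<i>) * contour_integral C (\<lambda>w. 1 / (w - a))" using near h by simp
    also have "\<dots> = winding_number C a"
      using winding_number_valid_path[OF vC, of a] CK[OF a] by simp
    finally show ?thesis using CK[OF a] by simp
  qed
  have "contour_integral C (\<lambda>u. (\<integral>x. complex_of_real (f x) * evp q u / (complex_of_real x - u) \<partial>M) / u ^ n)
      = contour_integral C G" by (simp add: eqG)
  also have "\<dots> = contour_integral p G" using near Gholo by simp
  also have "\<dots> = - (2 * pi * \<i>) * of_real (\<integral>x. f (cl x) * poly (poly_shift n q) (cl x) \<partial>M)"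
    unfolding G_def by (rule fubini_path[OF f pp clp]) (use near wp in auto)
  also have "(\<integral>x. f (cl x) * poly (poly_shift n q) (cl x) \<partial>M) = (\<integral>x. f x * poly (poly_shift n q) x \<partial>M)"
  proof (rule integral_cong_AE)
    have fcl: "continuous_on UNIV (\<lambda>x. f (cl x))"
      by (rule continuous_on_compose2[OF f cl_cont]) auto
    show "(\<lambda>x. f (cl x) * poly (poly_shift n q) (cl x)) \<in> borel_measurable M"
      by (rule meas) (intro continuous_intros fcl)
    show "(\<lambda>x. f x * poly (poly_shift n q) x) \<in> borel_measurable M"
      by (rule meas) (intro continuous_intros f)
    show "AE x in M. f (cl x) * poly (poly_shift n q) (cl x) = f x * poly (poly_shift n q) x"
      using AE_cl by (auto elim!: AE_mp)
  qed
  finally show ?thesis .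
qed

end

lemma contour_integral'_eq: "contour_integral' = contour_integral"
  unfolding contour_integral'_def[abs_def] contour_integral_def[abs_def] has_contour_integral'_def
    has_contour_integral_def contour_integrable_on_def by simp

lemma winding_number'_eq:
  "valid_path g \<Longrightarrow> z \<notin> path_image g \<Longrightarrow> winding_number' g z = winding_number g z"
  by (simp add: winding_number'_def contour_integral'_eq winding_number_valid_path)

lemma supp_AE:
  fixes w :: "real measure"
  assumes pw: "prob_space w" and sw: "sets w = sets borel" and neg: "emeasure w {..<0} = 0"
    and cpt: "compact (msupport w)"
  shows "0 \<le> Sup (msupport w) \<and> (AE x in w. x \<in> {0..Sup (msupport w)})"
proof -
  define I where "I = {r \<in> \<rat> \<times> \<rat>. emeasure w {fst r<..<snd r} = 0}"
  define U where "U = (\<Union>r\<in>I. {fst r<..<snd r})"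
  have cI: "countable I"
    by (rule countable_subset[of _ "\<rat> \<times> \<rat>"]) (auto simp: I_def countable_rat)
  have Un: "U \<in> null_sets w"
    unfolding U_def by (rule null_sets_UN'[OF cI]) (auto simp: I_def sw)
  have NU: "x \<in> U" if "x \<notin> msupport w" for x
  proof -
    have "\<exists>e>0. \<not> emeasure w {x - e<..<x + e} > 0" using that unfolding msupport_def by blast
    then obtain e where e: "e > 0" "\<not> emeasure w {x - e<..<x + e} > 0" by blast
    then have e0: "emeasure w {x - e<..<x + e} = 0" by (simp add: not_gr_zero)
    obtain r1 where r1: "r1 \<in> \<rat>" "x - e < r1" "r1 < x" using Rats_dense_in_real[of "x - e" x] e by auto
    obtain r2 where r2: "r2 \<in> \<rat>" "x < r2" "r2 < x + e" using Rats_dense_in_real[of x "x + e"] e by auto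
    have "emeasure w {r1<..<r2} \<le> emeasure w {x - e<..<x + e}"
      by (rule emeasure_mono) (use r1 r2 sw in auto)
    then have "emeasure w {r1<..<r2} = 0" using e0 by simp
    then have "(r1, r2) \<in> I" using r1 r2 by (auto simp: I_def)
    then show ?thesis using r1 r2 unfolding U_def by (intro UN_I[of "(r1, r2)"]) auto
  qed
  have AEs: "AE x in w. x \<in> msupport w"
    by (rule AE_I'[OF Un]) (use NU in auto)
  have nonneg: "x \<ge> 0" if "x \<in> msupport w" for x
  proof (rule ccontr)
    assume "\<not> x \<ge> 0"
    then have "- x > 0" by simp
    then have "emeasure w {x - (- x)<..<x + (- x)} > 0" using that unfolding msupport_def by blast
    moreover have "emeasure w {x - (- x)<..<x + (- x)} \<le> emeasure w {..<0}"
      by (rule emeasure_mono) (use sw in auto)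
    ultimately show False using neg by simp
  qed
  have ne: "msupport w \<noteq> {}"
  proof
    assume "msupport w = {}"
    then have "AE x in w. False" using AEs by simp
    then show False using prob_space.AE_False[OF pw] by simp
  qed
  have bdd: "bdd_above (msupport w)" using cpt by (simp add: compact_imp_bounded bounded_imp_bdd_above)
  have le: "x \<le> Sup (msupport w)" if "x \<in> msupport w" for x using cSup_upper[OF that bdd] .
  obtain x0 where "x0 \<in> msupport w" using ne by blast
  then have "0 \<le> Sup (msupport w)" using nonneg le by force
  moreover have "AE x in w. x \<in> {0..Sup (msupport w)}" using AEs by (auto elim!: AE_mp intro: nonneg le)
  ultimately show ?thesis by blast
qed

theorem lemma10p1:
  fixes la mu :: "nat \<Rightarrow> real" and w wh :: "real measure" and C :: "real \<Rightarrow> complex"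
  assumes la_pos: "\<And>k. la k > 0"
    and mu0: "mu 0 = 0"
    and mu_pos: "\<And>k. k \<ge> 1 \<Longrightarrow> mu k > 0"
    and series1: "(\<Sum>j. ennreal (1 / (la j * bd_pi la mu j) * (\<Sum>i\<le>j. bd_pi la mu i))) = \<infinity>"
    and series2: "(\<Sum>j. ennreal (1 / (la j * bd_pi la mu j))
                      * (\<Sum>i. ennreal (if j < i then bd_pi la mu i else 0))) = \<infinity>"
    and w_orth: "orth_measure la mu w"
    and w_unique: "\<And>m. orth_measure la mu m \<Longrightarrow> m = w"
    and wh_orth: "orth_measure (dual_la la mu) (dual_mu la mu) wh"
    and wh_unique: "\<And>m. orth_measure (dual_la la mu) (dual_mu la mu) m \<Longrightarrow> m = wh"
    and supp_compact: "compact (msupport w)"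
    and contour: "pos_simple_contour_enclosing C (complex_of_real ` {0 .. Sup (msupport w)})"
  shows "\<forall>i j.
     (\<forall>n\<ge>1. kconv_list (concat (replicate n [phi la mu, \<lambda>a b. phihat la mu a b / la 0])) i j
        = - contour_integral' C (\<lambda>u.
              (\<integral>x. complex_of_real (bd_pi la mu i * bdQ la mu i x) * bdQ la mu j u
                   / (complex_of_real x - u) \<partial>w) / u ^ n) / (2 * pi * \<i>))
   \<and> (\<forall>n. kconv_list (concat (replicate n [phi la mu, \<lambda>a b. phihat la mu a b / la 0]) @ [phi la mu]) i j
        = - contour_integral' C (\<lambda>u.
              (\<integral>x. complex_of_real (bd_pi la mu i * bdQ la mu i x)
                   * bdQ (dual_la la mu) (dual_mu la mu) j u
                   / (complex_of_real x - u) \<partial>w) / u ^ n) / (2 * pi * \<i>))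
   \<and> (\<forall>n\<ge>1. kconv_list (concat (replicate n [\<lambda>a b. phihat la mu a b / la 0, phi la mu])) i j
        = - contour_integral' C (\<lambda>u.
              (\<integral>x. complex_of_real (bd_pi (dual_la la mu) (dual_mu la mu) i
                        * bdQ (dual_la la mu) (dual_mu la mu) i x)
                   * bdQ (dual_la la mu) (dual_mu la mu) j u
                   / (complex_of_real x - u) \<partial>wh) / u ^ n) / (2 * pi * \<i>))
   \<and> (\<forall>n\<ge>1. kconv_list (concat (replicate (n - 1) [\<lambda>a b. phihat la mu a b / la 0, phi la mu])
                          @ [\<lambda>a b. phihat la mu a b / la 0]) i j
        = - contour_integral' C (\<lambda>u.
              (\<integral>x. complex_of_real (bd_pi (dual_la la mu) (dual_mu la mu) i
                        * bdQ (dual_la la mu) (dual_mu la mu) i x)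
                   * bdQ la mu j u
                   / (complex_of_real x - u) \<partial>wh) / u ^ n) / (2 * pi * \<i>))"
proof -
  interpret bdchain la mu using la_pos mu0 mu_pos by unfold_locales
  interpret S: setting la mu w wh using w_orth wh_orth wh_unique by unfold_locales
  define b where "b = Sup (msupport w)"
  have wo: "prob_space w" "sets w = sets borel" "emeasure w {..<0} = 0"
    using w_orth by (auto simp: orth_measure_def)
  have who: "prob_space wh" "sets wh = sets borel"
    using wh_orth by (auto simp: orth_measure_def)
  have sa: "0 \<le> b \<and> (AE x in w. x \<in> {0..b})"
    unfolding b_def by (rule supp_AE[OF wo supp_compact])
  interpret Mw: cmeas w b
  proof (rule cmeas.intro)
    show "finite_measure w" using wo(1) by (simp add: prob_space_def)
    show "sets w = sets borel" by (rule wo(2))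
    show "0 \<le> b" using sa by blast
    show "AE x in w. x \<in> {0..b}" using sa by blast
  qed
  have AEh: "AE x in wh. x \<in> {0..b}"
  proof -
    have gm: "(\<lambda>x. ennreal (x / la 0)) \<in> borel_measurable w"
      by (rule measurable_compose[OF S.g_meas measurable_ennreal])
    have A: "AE x in w. x \<in> {0..b}" using sa by blast
    have "AE x in w. 0 < ennreal (x / la 0) \<longrightarrow> x \<in> {0..b}"
      by (rule AE_mp[OF A]) (rule AE_I2, blast)
    then have "AE x in S.wd. x \<in> {0..b}"
      unfolding S.wd_def by (subst AE_density[OF gm])
    then show ?thesis by (subst S.wh_eq)
  qed
  interpret Mh: cmeas wh b
  proof (rule cmeas.intro)
    show "finite_measure wh" using who(1) by (simp add: prob_space_def)
    show "sets wh = sets borel" by (rule who(2))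
    show "0 \<le> b" using sa by blast
    show "AE x in wh. x \<in> {0..b}" by (rule AEh)
  qed
  have vC: "valid_path C" and clC: "pathfinish C = pathstart C"
    and CK0: "\<And>z. z \<in> complex_of_real ` {0..b} \<Longrightarrow> z \<notin> path_image C \<and> winding_number' C z = 1"
    using contour by (auto simp: pos_simple_contour_enclosing_def b_def)
  have CK: "z \<notin> path_image C \<and> winding_number C z = 1" if "z \<in> complex_of_real ` {0..b}" for z
    using CK0[OF that] winding_number'_eq[OF vC] by auto
  have KK: "Mw.K = complex_of_real ` {0..b}" "Mh.K = complex_of_real ` {0..b}"
    by (simp_all add: Mw.K_def Mh.K_def)
  have resw: "- contour_integral' C (\<lambda>u. (\<integral>x. complex_of_real (f x) * evp q u / (complex_of_real x - u) \<partial>w) / u ^ n) / (2 * pi * \<i>)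
      = of_real (\<integral>x. f x * poly (poly_shift n q) x \<partial>w)" if f: "continuous_on UNIV f" for f q n
  proof -
    have ci: "contour_integral C (\<lambda>u. (\<integral>x. complex_of_real (f x) * evp q u / (complex_of_real x - u) \<partial>w) / u ^ n)
       = - (2 * pi * \<i>) * of_real (\<integral>x. f x * poly (poly_shift n q) x \<partial>w)"
    proof (rule Mw.cont_main[OF f vC clC])
      fix z assume "z \<in> Mw.K"
      then show "z \<notin> path_image C \<and> winding_number C z = 1" using CK KK by simp
    qed
    show ?thesis unfolding contour_integral'_eq ci by simp
  qed
  have resh: "- contour_integral' C (\<lambda>u. (\<integral>x. complex_of_real (f x) * evp q u / (complex_of_real x - u) \<partial>wh) / u ^ n) / (2 * pi * \<i>)
      = of_real (\<integral>x. f x * poly (poly_shift n q) x \<partial>wh)" if f: "continuous_on UNIV f" for f q n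
  proof -
    have ci: "contour_integral C (\<lambda>u. (\<integral>x. complex_of_real (f x) * evp q u / (complex_of_real x - u) \<partial>wh) / u ^ n)
       = - (2 * pi * \<i>) * of_real (\<integral>x. f x * poly (poly_shift n q) x \<partial>wh)"
    proof (rule Mh.cont_main[OF f vC clC])
      fix z assume "z \<in> Mh.K"
      then show "z \<notin> path_image C \<and> winding_number C z = 1" using CK KK by simp
    qed
    show ?thesis unfolding contour_integral'_eq ci by simp
  qed
  have cfw: "(\<integral>x. ppi i * poly (Qp la mu i) x * poly P x \<partial>w) = S.cf i P" for i P
  proof -
    have "(\<lambda>x. ppi i * poly (Qp la mu i) x * poly P x) = (\<lambda>x. ppi i * poly (Qp la mu i * P) x)"
      by (simp add: fun_eq_iff)
    then show ?thesis unfolding S.cf_def Lf_def by (simp only: integral_mult_right_zero)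
  qed
  have chw: "(\<integral>x. pph i * poly (Qp dla dmu i) x * poly P x \<partial>wh) = S.ch i P" for i P
  proof -
    have "(\<lambda>x. pph i * poly (Qp dla dmu i) x * poly P x) = (\<lambda>x. pph i * poly (Qp dla dmu i * P) x)"
      by (simp add: fun_eq_iff)
    then show ?thesis unfolding S.ch_def Lf_def by (simp only: integral_mult_right_zero)
  qed
  show ?thesis
  proof (intro allI conjI impI)
    fix i j n :: nat
    have fw: "continuous_on UNIV (\<lambda>x. ppi i * poly (Qp la mu i) x)" by (intro continuous_intros)
    have fh: "continuous_on UNIV (\<lambda>x. pph i * poly (Qp dla dmu i) x)" by (intro continuous_intros)
    {
      assume n: "n \<ge> 1"
      then obtain m where m: "n = Suc m" by (cases n) auto
      show "complex_of_real (kconv_list (concat (replicate n [phi la mu, \<lambda>a b. phihat la mu a b / la 0])) i j)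
        = - contour_integral' C (\<lambda>u. (\<integral>x. complex_of_real (bd_pi la mu i * bdQ la mu i x) * bdQ la mu j u
                   / (complex_of_real x - u) \<partial>w) / u ^ n) / (2 * pi * \<i>)"
      proof -
        have k: "kconv_list (concat (replicate n [phi la mu, \<lambda>a b. phihat la mu a b / la 0])) i j = S.cf i (poly_shift n (Qp la mu j))"
          using S.kernels[of m i j] m by simp
        have r: "- contour_integral' C (\<lambda>u. (\<integral>x. complex_of_real (ppi i * poly (Qp la mu i) x) * evp (Qp la mu j) u / (complex_of_real x - u) \<partial>w) / u ^ n) / (2 * pi * \<i>)
            = of_real (S.cf i (poly_shift n (Qp la mu j)))"
          using resw[OF fw, of "Qp la mu j" n] cfw[of i] by simp
        show ?thesis using k r by (simp only: bdQ_evp evp_real)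
      qed
      show "complex_of_real (kconv_list (concat (replicate n [\<lambda>a b. phihat la mu a b / la 0, phi la mu])) i j)
        = - contour_integral' C (\<lambda>u. (\<integral>x. complex_of_real (bd_pi (dual_la la mu) (dual_mu la mu) i
                        * bdQ (dual_la la mu) (dual_mu la mu) i x)
                   * bdQ (dual_la la mu) (dual_mu la mu) j u
                   / (complex_of_real x - u) \<partial>wh) / u ^ n) / (2 * pi * \<i>)"
      proof -
        have k: "kconv_list (concat (replicate n [\<lambda>a b. phihat la mu a b / la 0, phi la mu])) i j = S.ch i (poly_shift n (Qp dla dmu j))"
          using S.kernels[of m i j] m by simp
        have r: "- contour_integral' C (\<lambda>u. (\<integral>x. complex_of_real (pph i * poly (Qp dla dmu i) x) * evp (Qp dla dmu j) u / (complex_of_real x - u) \<partial>wh) / u ^ n) / (2 * pi * \<i>)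
            = of_real (S.ch i (poly_shift n (Qp dla dmu j)))"
          using resh[OF fh, of "Qp dla dmu j" n] chw[of i] by simp
        show ?thesis using k r by (simp only: bdQ_evp evp_real)
      qed
      show "complex_of_real (kconv_list (concat (replicate (n - 1) [\<lambda>a b. phihat la mu a b / la 0, phi la mu])
                          @ [\<lambda>a b. phihat la mu a b / la 0]) i j)
        = - contour_integral' C (\<lambda>u. (\<integral>x. complex_of_real (bd_pi (dual_la la mu) (dual_mu la mu) i
                        * bdQ (dual_la la mu) (dual_mu la mu) i x)
                   * bdQ la mu j u
                   / (complex_of_real x - u) \<partial>wh) / u ^ n) / (2 * pi * \<i>)"
      proof -
        have k: "kconv_list (concat (replicate (n - 1) [\<lambda>a b. phihat la mu a b / la 0, phi la mu]) @ [\<lambda>a b. phihat la mu a b / la 0]) i j = S.ch i (poly_shift n (Qp la mu j))"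
          using S.kernels[of m i j] m by simp
        have r: "- contour_integral' C (\<lambda>u. (\<integral>x. complex_of_real (pph i * poly (Qp dla dmu i) x) * evp (Qp la mu j) u / (complex_of_real x - u) \<partial>wh) / u ^ n) / (2 * pi * \<i>)
            = of_real (S.ch i (poly_shift n (Qp la mu j)))"
          using resh[OF fh, of "Qp la mu j" n] chw[of i] by simp
        show ?thesis using k r by (simp only: bdQ_evp evp_real)
      qed
    }
    show "complex_of_real (kconv_list (concat (replicate n [phi la mu, \<lambda>a b. phihat la mu a b / la 0]) @ [phi la mu]) i j)
        = - contour_integral' C (\<lambda>u. (\<integral>x. complex_of_real (bd_pi la mu i * bdQ la mu i x)
                   * bdQ (dual_la la mu) (dual_mu la mu) j u
                   / (complex_of_real x - u) \<partial>w) / u ^ n) / (2 * pi * \<i>)"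
    proof -
      have k: "kconv_list (concat (replicate n [phi la mu, \<lambda>a b. phihat la mu a b / la 0]) @ [phi la mu]) i j = S.cf i (poly_shift n (Qp dla dmu j))"
        using S.kernels[of n i j] by simp
      have r: "- contour_integral' C (\<lambda>u. (\<integral>x. complex_of_real (ppi i * poly (Qp la mu i) x) * evp (Qp dla dmu j) u / (complex_of_real x - u) \<partial>w) / u ^ n) / (2 * pi * \<i>)
          = of_real (S.cf i (poly_shift n (Qp dla dmu j)))"
        using resw[OF fw, of "Qp dla dmu j" n] cfw[of i] by simp
      show ?thesis using k r by (simp only: bdQ_evp evp_real)
    qed
  qed
qed

end
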